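(* Let $p,q$ be positive integers with $\min\{2,\frac{p}{4}\}\leq q\leq 4p$. Then \[pq+\left\lfloor\frac{1}{2}\binom{q}{2}\right\rfloor\leq \operatorname{diam}(\mathcal{R}(K_{p,q})).\]
   Context: $K_{p,q}$ is the complete bipartite graph with parts of sizes $p$ and $q$. For a connected graph $G$, a search tree on $G$ is a rooted tree with vertex set $V(G)$ defined recursively: its root is some vertex $r\in V(G)$, and the children of $r$ are the roots of search trees on the connected components of $G-r$. For a rooted tree $T$ and $w\in V(T)$, $T|w$ denotes the subtree rooted at $w$. Let $T$ be a search tree on $G$, let $v$ be a child of $u$ in $T$, and let $p$ be the parent of $u$ (if it exists). The $uv$-rotation transforms $T$ into the search tree $T'$ in which: $u$ is a child of $v$ and $v$ is a child of $p$ (or $v$ is the root if $u$ was the root); every subtree of $u$ in $T$ other than $T|v$ is a subtree of $u$ in $T'$; and every subtree $S$ of $v$ in $T$ is a subtree of $u$ in $T'$ if $u$ is adjacent in $G$ to some vertex of $S$, and a subtree of $v$ in $T'$ otherwise. The rotation graph $\mathcal{R}(G)$ is the graph whose vertices are the search trees on $G$, two being adjacent iff they differ by one rotation. $\operatorname{diam}$ denotes graph diameter. *)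

theory Defs
  imports Main "HOL-Library.Extended_Nat"
begin

(* Graphs: vertex set V :: 'a set, adjacency E :: 'a => 'a => bool (symmetric, irreflexive). *)

definition reach_in :: "('a \<Rightarrow> 'a \<Rightarrow> bool) \<Rightarrow> 'a set \<Rightarrow> 'a \<Rightarrow> 'a \<Rightarrow> bool" where
  "reach_in E S x y \<longleftrightarrow> (x, y) \<in> {(a, b). a \<in> S \<and> b \<in> S \<and> E a b}\<^sup>*"

definition components_in :: "('a \<Rightarrow> 'a \<Rightarrow> bool) \<Rightarrow> 'a set \<Rightarrow> 'a set set" where
  "components_in E S = {{y \<in> S. reach_in E S x y} | x. x \<in> S}"

definition connected_in :: "('a \<Rightarrow> 'a \<Rightarrow> bool) \<Rightarrow> 'a set \<Rightarrow> bool" where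
  "connected_in E S \<longleftrightarrow> S \<noteq> {} \<and> (\<forall>x\<in>S. \<forall>y\<in>S. reach_in E S x y)"

(* A rooted tree on a vertex set is represented by its parent map f
   (f x = None for the root and for vertices outside the tree).
   st E f S r: the tree described by f restricted to S is a search tree on G[S] rooted at r,
   i.e. r \<in> S and the children of r are the roots of search trees on the components of G[S]-r. *)
inductive st :: "('a \<Rightarrow> 'a \<Rightarrow> bool) \<Rightarrow> ('a \<Rightarrow> 'a option) \<Rightarrow> 'a set \<Rightarrow> 'a \<Rightarrow> bool"
  for E f where
  "r \<in> S \<Longrightarrow> (\<forall>C \<in> components_in E (S - {r}). \<exists>c\<in>C. f c = Some r \<and> st E f C c)
    \<Longrightarrow> st E f S r"

definition search_tree :: "('a \<Rightarrow> 'a \<Rightarrow> bool) \<Rightarrow> 'a set \<Rightarrow> ('a \<Rightarrow> 'a option) \<Rightarrow> bool" where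
  "search_tree E V f \<longleftrightarrow> (\<exists>r. st E f V r \<and> f r = None) \<and> (\<forall>x. x \<notin> V \<longrightarrow> f x = None)"

definition subtree :: "('a \<Rightarrow> 'a option) \<Rightarrow> 'a \<Rightarrow> 'a set" where
  "subtree f w = {x. (x, w) \<in> {(a, b). f a = Some b}\<^sup>*}"

(* the uv-rotation, where v is a child of u (f v = Some u) *)
definition rotate :: "('a \<Rightarrow> 'a \<Rightarrow> bool) \<Rightarrow> ('a \<Rightarrow> 'a option) \<Rightarrow> 'a \<Rightarrow> 'a \<Rightarrow> ('a \<Rightarrow> 'a option)" where
  "rotate E f u v = (\<lambda>x.
     if x = v then f u
     else if x = u then Some v
     else if f x = Some v then (if (\<exists>y \<in> subtree f x. E u y) then Some u else Some v)
     else f x)"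

definition rotation_step :: "('a \<Rightarrow> 'a \<Rightarrow> bool) \<Rightarrow> ('a \<Rightarrow> 'a option) \<Rightarrow> ('a \<Rightarrow> 'a option) \<Rightarrow> bool" where
  "rotation_step E f g \<longleftrightarrow> (\<exists>u v. f v = Some u \<and> g = rotate E f u v)"

definition rot_edges :: "('a \<Rightarrow> 'a \<Rightarrow> bool) \<Rightarrow> 'a set \<Rightarrow> (('a \<Rightarrow> 'a option) \<times> ('a \<Rightarrow> 'a option)) set" where
  "rot_edges E V = {(f, g). search_tree E V f \<and> search_tree E V g \<and>
                            (rotation_step E f g \<or> rotation_step E g f)}"

(* graph distance in R(G) (infinity if not connected) *)
definition rot_dist :: "('a \<Rightarrow> 'a \<Rightarrow> bool) \<Rightarrow> 'a set \<Rightarrow> ('a \<Rightarrow> 'a option) \<Rightarrow> ('a \<Rightarrow> 'a option) \<Rightarrow> enat" where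
  "rot_dist E V f g = (INF n \<in> {n. (f, g) \<in> (rot_edges E V) ^^ n}. enat n)"

definition rot_diam :: "('a \<Rightarrow> 'a \<Rightarrow> bool) \<Rightarrow> 'a set \<Rightarrow> enat" where
  "rot_diam E V = (SUP (f, g) \<in> {(f, g). search_tree E V f \<and> search_tree E V g}. rot_dist E V f g)"

definition Kpq_verts :: "nat \<Rightarrow> nat \<Rightarrow> (nat + nat) set" where
  "Kpq_verts p q = Inl ` {..<p} \<union> Inr ` {..<q}"

definition Kpq_adj :: "nat + nat \<Rightarrow> nat + nat \<Rightarrow> bool" where
  "Kpq_adj x y \<longleftrightarrow> isl x \<noteq> isl y"

end

theory Submission
  imports Defs
begin



section \<open>Components\<close>

definition grel :: "('a \<Rightarrow> 'a \<Rightarrow> bool) \<Rightarrow> 'a set \<Rightarrow> ('a \<times> 'a) set" where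
  "grel E S = {(a, b). a \<in> S \<and> b \<in> S \<and> E a b}"

lemma reach_in_grel: "reach_in E S x y \<longleftrightarrow> (x, y) \<in> (grel E S)\<^sup>*"
  unfolding reach_in_def grel_def by simp

lemma grel_conv: "\<forall>x y. E x y = E y x \<Longrightarrow> (grel E S)\<inverse> = grel E S"
  unfolding grel_def by auto

lemma reach_refl: "reach_in E S x x"
  by (simp add: reach_in_grel)

lemma reach_sym:
  assumes "\<forall>x y. E x y = E y x" "reach_in E S x y"
  shows "reach_in E S y x"
proof -
  have "(y, x) \<in> ((grel E S)\<inverse>)\<^sup>*" using assms(2)
    by (simp add: reach_in_grel rtrancl_converseI)
  then show ?thesis using grel_conv[OF assms(1)] by (simp add: reach_in_grel)
qed

lemma reach_trans: "reach_in E S x y \<Longrightarrow> reach_in E S y z \<Longrightarrow> reach_in E S x z"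
  by (simp add: reach_in_grel)

lemma reach_step: "reach_in E S x y \<Longrightarrow> y \<in> S \<Longrightarrow> z \<in> S \<Longrightarrow> E y z \<Longrightarrow> reach_in E S x z"
  unfolding reach_in_grel by (rule rtrancl_into_rtrancl) (auto simp: grel_def)

lemma reach_edge: "y \<in> S \<Longrightarrow> z \<in> S \<Longrightarrow> E y z \<Longrightarrow> reach_in E S y z"
  using reach_step[OF reach_refl] by metis

lemma reach_mem: "reach_in E S x y \<Longrightarrow> x \<in> S \<Longrightarrow> y \<in> S"
  unfolding reach_in_grel by (induct rule: rtrancl_induct) (auto simp: grel_def)

lemma reach_mono:
  assumes "reach_in E S x y" and sub: "S \<subseteq> S'"
  shows "reach_in E S' x y"
  using assms(1) unfolding reach_in_grel
proof (induct rule: rtrancl_induct)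
  case base then show ?case by simp
next
  case (step y z)
  have "(y, z) \<in> grel E S'" using step(2) sub unfolding grel_def by auto
  then show ?case using step(3) by (rule rtrancl_into_rtrancl[rotated])
qed

lemma comp_mem: "C \<in> components_in E S \<longleftrightarrow> (\<exists>x\<in>S. C = {y \<in> S. reach_in E S x y})"
  unfolding components_in_def by auto

lemma comp_sub: "C \<in> components_in E S \<Longrightarrow> C \<subseteq> S"
  unfolding comp_mem by auto

lemma comp_cover: "x \<in> S \<Longrightarrow> {y \<in> S. reach_in E S x y} \<in> components_in E S"
  unfolding comp_mem by auto

lemma comp_self: "x \<in> S \<Longrightarrow> x \<in> {y \<in> S. reach_in E S x y}"
  by (simp add: reach_refl)

lemma comp_eq:
  assumes sym: "\<forall>x y. E x y = E y x" and C: "C \<in> components_in E S" and y: "y \<in> C"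
  shows "C = {z \<in> S. reach_in E S y z}"
proof -
  obtain x where x: "x \<in> S" "C = {y \<in> S. reach_in E S x y}" using C unfolding comp_mem by auto
  have xy: "reach_in E S x y" using y x by auto
  have yx: "reach_in E S y x" using reach_sym[OF sym xy] .
  have "reach_in E S x z \<longleftrightarrow> reach_in E S y z" for z
    using reach_trans[OF xy, of z] reach_trans[OF yx, of z] by blast
  then show ?thesis using x(2) by blast
qed

lemma comp_disj:
  assumes sym: "\<forall>x y. E x y = E y x" and "C \<in> components_in E S" "C' \<in> components_in E S"
    "y \<in> C" "y \<in> C'"
  shows "C = C'"
  using comp_eq[OF sym assms(2,4)] comp_eq[OF sym assms(3,5)] by simp

lemma comp_noedge:
  assumes sym: "\<forall>x y. E x y = E y x" and C: "C \<in> components_in E S" and C': "C' \<in> components_in E S"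
    and x: "x \<in> C" and y: "y \<in> C'" and e: "E x y"
  shows "C = C'"
proof -
  have CS: "C = {z \<in> S. reach_in E S x z}" by (rule comp_eq[OF sym C x])
  have "x \<in> S" "y \<in> S" using comp_sub[OF C] comp_sub[OF C'] x y by auto
  then have "reach_in E S x y" using reach_edge e by metis
  then have "y \<in> C" using CS \<open>y \<in> S\<close> by simp
  then show ?thesis using comp_disj[OF sym C C' _ y] by simp
qed

lemma reach_in_comp:
  assumes "reach_in E S x y" "x \<in> S"
  shows "reach_in E {z \<in> S. reach_in E S x z} x y"
  using assms(1) unfolding reach_in_grel
proof (induct rule: rtrancl_induct)
  case base then show ?case by simp
next
  case (step y z)
  have "(x, y) \<in> (grel E S)\<^sup>*" "(x, z) \<in> (grel E S)\<^sup>*"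
    using step(1,2) by auto
  then show ?case using step(2,3) unfolding grel_def
    by (auto intro: rtrancl_into_rtrancl simp: reach_in_grel grel_def)
qed

lemma comp_connected:
  assumes sym: "\<forall>x y. E x y = E y x" and C: "C \<in> components_in E S"
  shows "connected_in E C"
proof -
  obtain x where x: "x \<in> S" "C = {y \<in> S. reach_in E S x y}" using C unfolding comp_mem by auto
  have "reach_in E C y z" if "y \<in> C" "z \<in> C" for y z
  proof -
    have "reach_in E C x y" "reach_in E C x z" using reach_in_comp[of E S x] that x by auto
    then show ?thesis using reach_sym[OF sym] reach_trans by metis
  qed
  moreover have "x \<in> C" using x reach_refl by auto
  then have "C \<noteq> {}" by auto
  ultimately show ?thesis unfolding connected_in_def by auto
qed

lemma connected_comps:
  assumes "connected_in E S"
  shows "components_in E S = {S}"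
  using assms unfolding connected_in_def components_in_def by auto

lemma indep_comps:
  assumes "\<forall>x\<in>S. \<forall>y\<in>S. \<not> E x y"
  shows "components_in E S = (\<lambda>x. {x}) ` S"
proof -
  have "{y \<in> S. reach_in E S x y} = {x}" if "x \<in> S" for x
  proof -
    have "reach_in E S x y \<Longrightarrow> y = x" for y
      unfolding reach_in_grel
      by (induct rule: rtrancl_induct) (use assms in \<open>auto simp: grel_def\<close>)
    then show ?thesis using that reach_refl by auto
  qed
  then show ?thesis unfolding components_in_def by auto
qed

lemma conn_nbr:
  assumes sym: "\<forall>x y. E x y = E y x" and conn: "connected_in E S" and r: "r \<in> S"
    and C: "C \<in> components_in E (S - {r})"
  shows "\<exists>y\<in>C. E r y"
proof -
  obtain c where c: "c \<in> C"
  proof -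
    obtain x where "x \<in> S - {r}" "C = {y \<in> S - {r}. reach_in E (S - {r}) x y}"
      using C unfolding comp_mem by blast
    then show ?thesis by (intro that[of x]) (simp add: reach_refl)
  qed
  have cS: "c \<in> S - {r}" using comp_sub[OF C] c by auto
  have "reach_in E S r c" using conn r cS unfolding connected_in_def by auto
  then have "(r, c) \<in> (grel E S)\<^sup>*" by (simp add: reach_in_grel)
  then have "\<forall>z. z \<noteq> r \<longrightarrow> z = c \<longrightarrow> (\<exists>y\<in>{w \<in> S - {r}. reach_in E (S - {r}) z w}. E r y)"
  proof (induct rule: rtrancl_induct)
    case base then show ?case by simp
  next
    case (step y z)
    show ?case
    proof (intro allI impI)
      fix w assume wr: "w \<noteq> r" and wz: "w = z"
      have yz: "y \<in> S" "z \<in> S" "E y z" using step(2) by (auto simp: grel_def)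
      show "\<exists>y\<in>{w' \<in> S - {r}. reach_in E (S - {r}) w w'}. E r y"
      proof (cases "y = r")
        case True
        then have "z \<in> {w' \<in> S - {r}. reach_in E (S - {r}) w w'}" using yz wr wz reach_refl by simp
        then show ?thesis using yz True by blast
      next
        case False
        then obtain y' where y': "y' \<in> {w \<in> S - {r}. reach_in E (S - {r}) y w}" "E r y'"
          using step(3) by blast
        have e: "reach_in E (S - {r}) y z" using reach_edge[of y "S - {r}" z E] yz False wr wz by auto
        have "reach_in E (S - {r}) z y" using reach_sym[OF sym e] .
        then have "reach_in E (S - {r}) z y'" using reach_trans[of E "S-{r}" z y y'] y'(1) by simp
        then have "y' \<in> {w' \<in> S - {r}. reach_in E (S - {r}) w w'}" using y'(1) wz by simp
        then show ?thesis using y'(2) by blast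
      qed
    qed
  qed
  then obtain y where y: "y \<in> {w \<in> S - {r}. reach_in E (S - {r}) c w}" "E r y"
    using cS by blast
  have "C = {w \<in> S - {r}. reach_in E (S - {r}) c w}" by (rule comp_eq[OF sym C c])
  then have "y \<in> C" using y(1) by simp
  then show ?thesis using y(2) by blast
qed



definition par :: "('a \<Rightarrow> 'a option) \<Rightarrow> ('a \<times> 'a) set" where
  "par f = {(a, b). f a = Some b}"

definition Anc :: "('a \<Rightarrow> 'a option) \<Rightarrow> 'a \<Rightarrow> 'a set" where
  "Anc f y = {x. (y, x) \<in> (par f)\<^sup>+}"

definition TT :: "('a \<Rightarrow> 'a option) \<Rightarrow> 'a \<Rightarrow> 'a set" where
  "TT f x = {y. (y, x) \<in> (par f)\<^sup>*}"

lemma subtree_TT: "subtree f w = TT f w"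
  unfolding subtree_def TT_def par_def by simp

lemma par_iff[simp]: "(a, b) \<in> par f \<longleftrightarrow> f a = Some b"
  by (simp add: par_def)

lemma sv_par: "single_valued (par f)"
  unfolding single_valued_def par_def by auto

lemma Anc_rec: "Anc f y = (case f y of None \<Rightarrow> {} | Some z \<Rightarrow> insert z (Anc f z))"
proof (cases "f y")
  case None
  have "(y, x) \<notin> (par f)\<^sup>+" for x
  proof
    assume "(y, x) \<in> (par f)\<^sup>+"
    then obtain z where "(y, z) \<in> par f" by (meson converse_tranclE)
    then show False using None by simp
  qed
  then show ?thesis using None by (simp add: Anc_def)
next
  case (Some z)
  have "(y, x) \<in> (par f)\<^sup>+ \<longleftrightarrow> x = z \<or> (z, x) \<in> (par f)\<^sup>+" for x
  proof
    assume "(y, x) \<in> (par f)\<^sup>+"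
    then obtain w where "(y, w) \<in> par f" "(w, x) \<in> (par f)\<^sup>*" by (meson tranclD)
    then show "x = z \<or> (z, x) \<in> (par f)\<^sup>+" using Some by (auto simp: rtrancl_eq_or_trancl)
  next
    assume "x = z \<or> (z, x) \<in> (par f)\<^sup>+"
    then show "(y, x) \<in> (par f)\<^sup>+" using Some
      by (auto intro: trancl_into_trancl2)
  qed
  then show ?thesis using Some by (auto simp: Anc_def)
qed

lemma TT_rec: "y \<in> TT f x \<longleftrightarrow> y = x \<or> (\<exists>z. f y = Some z \<and> z \<in> TT f x)"
proof
  assume "y \<in> TT f x"
  then have "(y, x) \<in> (par f)\<^sup>*" by (simp add: TT_def)
  then show "y = x \<or> (\<exists>z. f y = Some z \<and> z \<in> TT f x)"
    by (cases rule: converse_rtranclE) (auto simp: TT_def)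
next
  assume "y = x \<or> (\<exists>z. f y = Some z \<and> z \<in> TT f x)"
  then show "y \<in> TT f x"
    by (auto simp: TT_def intro: converse_rtrancl_into_rtrancl)
qed

lemma TT_self[simp]: "x \<in> TT f x"
  by (simp add: TT_def)

lemma TT_trans: "y \<in> TT f x \<Longrightarrow> x \<in> TT f z \<Longrightarrow> y \<in> TT f z"
  by (auto simp: TT_def)

lemma TT_child: "f c = Some x \<Longrightarrow> c \<in> TT f x"
  by (auto simp: TT_def)

lemma TT_child_sub: "f c = Some x \<Longrightarrow> TT f c \<subseteq> TT f x"
proof
  fix y assume "f c = Some x" "y \<in> TT f c"
  then show "y \<in> TT f x" using TT_trans[of y f c x] TT_child[of f c x] by simp
qed

lemma Anc_TT: "x \<in> Anc f y \<longleftrightarrow> y \<in> TT f x \<and> y \<noteq> x \<or> (x = y \<and> (y, y) \<in> (par f)\<^sup>+)"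
  unfolding Anc_def TT_def by (auto simp: rtrancl_eq_or_trancl)

lemma desc_child:
  assumes "z \<in> TT f x" "z \<noteq> x"
  shows "\<exists>c. f c = Some x \<and> z \<in> TT f c"
proof -
  have "(z, x) \<in> (par f)\<^sup>+" using assms by (auto simp: TT_def rtrancl_eq_or_trancl)
  then obtain c where "(z, c) \<in> (par f)\<^sup>*" "(c, x) \<in> par f" by (meson tranclD2)
  then show ?thesis by (auto simp: TT_def)
qed

lemma cyc_prop:
  assumes "(x, x) \<in> (par f)\<^sup>+" "(x, z) \<in> (par f)\<^sup>*"
  shows "(z, z) \<in> (par f)\<^sup>+"
  using assms(2,1)
proof (induct rule: rtrancl_induct)
  case base then show ?case by simp
next
  case (step y z)
  have yy: "(y, y) \<in> (par f)\<^sup>+" using step by simp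
  then obtain y' where y': "(y, y') \<in> par f" "(y', y) \<in> (par f)\<^sup>*"
    by (meson tranclD)
  have "y' = z" using y'(1) step(2) by simp
  then show ?case using y'(2) step(2) by (auto intro: rtrancl_into_trancl1)
qed

lemma st_reach:
  assumes "st E f S r"
  shows "r \<in> S \<and> (\<forall>x\<in>S. (x, r) \<in> (par f)\<^sup>*)"
  using assms
proof (induct rule: st.induct)
  case (1 r S)
  have "(x, r) \<in> (par f)\<^sup>*" if x: "x \<in> S" for x
  proof (cases "x = r")
    case True then show ?thesis by simp
  next
    case False
    then have xS: "x \<in> S - {r}" using x by simp
    define C where "C = {y \<in> S - {r}. reach_in E (S - {r}) x y}"
    have C: "C \<in> components_in E (S - {r})" unfolding C_def by (rule comp_cover[OF xS])
    have xC: "x \<in> C" unfolding C_def using xS reach_refl by simp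
    obtain c where c: "c \<in> C" "f c = Some r" "\<forall>y\<in>C. (y, c) \<in> (par f)\<^sup>*"
      using 1(2) C by blast
    have "(x, c) \<in> (par f)\<^sup>*" using c(3) xC by simp
    then show ?thesis using c(2) by (auto intro: rtrancl_into_rtrancl)
  qed
  then show ?case using 1(1) by simp
qed

lemma st_cong:
  assumes "st E f S r" "\<forall>w\<in>S - {r}. f w = g w"
  shows "st E g S r"
  using assms
proof (induct rule: st.induct)
  case (1 r S)
  show ?case
  proof (rule st.intros)
    show "r \<in> S" by fact
    show "\<forall>C\<in>components_in E (S - {r}). \<exists>c\<in>C. g c = Some r \<and> st E g C c"
    proof
      fix C assume C: "C \<in> components_in E (S - {r})"
      then obtain c where c: "c \<in> C" "f c = Some r" "\<forall>w\<in>C - {c}. f w = g w \<Longrightarrow> st E g C c"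
        using 1(2) by blast
      have CS: "C \<subseteq> S - {r}" using comp_sub[OF C] .
      have "c \<in> S - {r}" using c(1) CS by blast
      then have "g c = Some r" using c(2) 1(3) by simp
      moreover have "st E g C c" using c(3) CS 1(3) by auto
      ultimately show "\<exists>c\<in>C. g c = Some r \<and> st E g C c" using c(1) by blast
    qed
  qed
qed

section \<open>Structure of search trees\<close>

locale stree =
  fixes E :: "'a \<Rightarrow> 'a \<Rightarrow> bool" and V :: "'a set" and f :: "'a \<Rightarrow> 'a option" and r :: 'a
  assumes symE: "\<forall>x y. E x y = E y x"
    and stV: "st E f V r" and root: "f r = None" and outside: "\<forall>x. x \<notin> V \<longrightarrow> f x = None"
    and conV: "connected_in E V"
begin

lemma V_TT: "V = TT f r"
proof
  show "V \<subseteq> TT f r" using st_reach[OF stV] by (auto simp: TT_def)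
next
  show "TT f r \<subseteq> V"
  proof
    fix x assume "x \<in> TT f r"
    then have "x = r \<or> (\<exists>z. f x = Some z \<and> z \<in> TT f r)" by (simp add: TT_rec[of x])
    then show "x \<in> V" using st_reach[OF stV] outside by force
  qed
qed

lemma rV: "r \<in> V" using st_reach[OF stV] by simp

lemma acyc: "(x, x) \<notin> (par f)\<^sup>+"
proof
  assume xx: "(x, x) \<in> (par f)\<^sup>+"
  then obtain y where "(x, y) \<in> par f" by (meson converse_tranclE)
  then have "x \<in> V" using outside by auto
  then have "(x, r) \<in> (par f)\<^sup>*" using V_TT by (auto simp: TT_def)
  then have "(r, r) \<in> (par f)\<^sup>+" using cyc_prop[OF xx] by simp
  then obtain z where "(r, z) \<in> par f" by (meson converse_tranclE)
  then show False using root by simp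
qed

lemma Anc_iff: "x \<in> Anc f y \<longleftrightarrow> y \<in> TT f x \<and> y \<noteq> x"
  using Anc_TT acyc by metis

lemma in_V: "f x = Some y \<Longrightarrow> x \<in> V \<and> y \<in> V"
proof -
  assume fx: "f x = Some y"
  then have xV: "x \<in> V" using outside by force
  then have "x \<in> TT f r" using V_TT by simp
  then have "x = r \<or> (\<exists>z. f x = Some z \<and> z \<in> TT f r)" by (simp add: TT_rec[of x])
  then have "y \<in> TT f r" using fx root by auto
  then show ?thesis using xV V_TT by simp
qed

lemma TT_V: "x \<in> V \<Longrightarrow> TT f x \<subseteq> V"
proof
  fix y assume "x \<in> V" "y \<in> TT f x"
  then show "y \<in> V" using V_TT TT_trans[of y f x r] by simp
qed

lemma child_ne: "f c = Some x \<Longrightarrow> c \<noteq> x"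
  using acyc[of c] by auto

lemma not_up: "f c = Some x \<Longrightarrow> x \<notin> TT f c"
proof
  assume "f c = Some x" "x \<in> TT f c"
  then have "(c, x) \<in> par f" "(x, c) \<in> (par f)\<^sup>*" by (auto simp: TT_def)
  then have "(c, c) \<in> (par f)\<^sup>+" by (auto intro: rtrancl_into_trancl2)
  then show False using acyc by simp
qed

lemma child_eq:
  assumes "f c = Some x" "f c' = Some x" "c \<in> TT f c'"
  shows "c = c'"
proof (rule ccontr)
  assume "c \<noteq> c'"
  then obtain z where "f c = Some z" "z \<in> TT f c'"
    using assms(3) TT_rec[of c f c'] by auto
  then have "x \<in> TT f c'" using assms(1) by simp
  then show False using not_up[OF assms(2)] by simp
qed

definition Qp :: "'a \<Rightarrow> bool" where
  "Qp y \<longleftrightarrow> st E f (TT f y) y \<and> connected_in E (TT f y) \<and>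
     components_in E (TT f y - {y}) = {TT f c | c. f c = Some y}"

lemma struct_ind:
  assumes "st E f S x"
  shows "S = TT f x \<Longrightarrow> connected_in E S \<Longrightarrow> \<forall>y\<in>S. Qp y"
  using assms
proof (induct rule: st.induct)
  case (1 x S)
  note H = 1(2)
  have claimA: "TT f c = C" if C: "C \<in> components_in E (S - {x})" and c: "c \<in> C" "f c = Some x"
    and stc: "st E f C c" for C c
  proof
    show "C \<subseteq> TT f c" using st_reach[OF stc] by (auto simp: TT_def)
  next
    show "TT f c \<subseteq> C"
    proof
      fix z assume z: "z \<in> TT f c"
      have zx: "z \<in> TT f x" using TT_trans[OF z TT_child[of f c x, OF c(2)]] .
      have "z \<noteq> x" using z not_up[OF c(2)] by auto
      then have zS: "z \<in> S - {x}" using zx 1(3) by simp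
      define C' where "C' = {y \<in> S - {x}. reach_in E (S - {x}) z y}"
      have C': "C' \<in> components_in E (S - {x})" unfolding C'_def by (rule comp_cover[OF zS])
      have zC': "z \<in> C'" unfolding C'_def using zS reach_refl by simp
      obtain c' where c': "c' \<in> C'" "f c' = Some x" "st E f C' c'" using H C' by blast
      have "z \<in> TT f c'" using st_reach[OF c'(3)] zC' by (auto simp: TT_def)
      then have "(z, c) \<in> (par f)\<^sup>*" "(z, c') \<in> (par f)\<^sup>*" using z by (auto simp: TT_def)
      then have "(c, c') \<in> (par f)\<^sup>* \<or> (c', c) \<in> (par f)\<^sup>*"
        by (rule single_valued_confluent[OF sv_par])
      then have "c = c'" using child_eq[OF c(2) c'(2)] child_eq[OF c'(2) c(2)] by (auto simp: TT_def)
      then have "C = C'" using comp_disj[OF symE C C'] c(1) c'(1) by simp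
      then show "z \<in> C" using zC' by simp
    qed
  qed
  have stS: "st E f S x"
    by (rule st.intros) (use 1(1) H in blast)+
  have comps: "components_in E (S - {x}) = {TT f c | c. f c = Some x}"
  proof
    show "components_in E (S - {x}) \<subseteq> {TT f c | c. f c = Some x}"
    proof
      fix C assume C: "C \<in> components_in E (S - {x})"
      then obtain c where "c \<in> C" "f c = Some x" "st E f C c" using H by blast
      then show "C \<in> {TT f c | c. f c = Some x}" using claimA[OF C] by blast
    qed
  next
    show "{TT f c | c. f c = Some x} \<subseteq> components_in E (S - {x})"
    proof
      fix D assume "D \<in> {TT f c | c. f c = Some x}"
      then obtain c where D: "D = TT f c" and fc: "f c = Some x" by blast
      have cS: "c \<in> S - {x}" using TT_child[of f c x, OF fc] 1(3) child_ne[OF fc] by simp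
      define C where "C = {y \<in> S - {x}. reach_in E (S - {x}) c y}"
      have C: "C \<in> components_in E (S - {x})" unfolding C_def by (rule comp_cover[OF cS])
      have cC: "c \<in> C" unfolding C_def using cS reach_refl by simp
      obtain c'' where c'': "c'' \<in> C" "f c'' = Some x" "st E f C c''" using H C by blast
      have TC: "TT f c'' = C" using claimA[OF C c''(1,2) c''(3)] .
      have "c = c''" using child_eq[OF fc c''(2)] cC TC by simp
      then show "D \<in> components_in E (S - {x})" using D TC C by simp
    qed
  qed
  have Qx: "Qp x" unfolding Qp_def using stS 1(3,4) comps by simp
  have "Qp y" if y: "y \<in> S - {x}" for y
  proof -
    define C where "C = {z \<in> S - {x}. reach_in E (S - {x}) y z}"
    have C: "C \<in> components_in E (S - {x})" unfolding C_def by (rule comp_cover[OF y])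
    have yC: "y \<in> C" unfolding C_def using y reach_refl by simp
    obtain c where c: "c \<in> C" "f c = Some x" "st E f C c"
      "C = TT f c \<Longrightarrow> connected_in E C \<Longrightarrow> \<forall>y\<in>C. Qp y" using H C by blast
    have "TT f c = C" using claimA[OF C c(1,2,3)] .
    then show "Qp y" using c(4) comp_connected[OF symE C] yC by auto
  qed
  then show ?case using Qx by blast
qed

lemma Qp_all: "y \<in> V \<Longrightarrow> Qp y"
  using struct_ind[OF stV V_TT conV] by blast

lemma sib_noedge:
  assumes "f c = Some x" "f c' = Some x" "c \<noteq> c'" "a \<in> TT f c" "b \<in> TT f c'"
  shows "\<not> E a b"
proof
  assume e: "E a b"
  have xV: "x \<in> V" using in_V[OF assms(1)] by simp
  have comps: "components_in E (TT f x - {x}) = {TT f c | c. f c = Some x}"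
    using Qp_all[OF xV] by (simp add: Qp_def)
  have C: "TT f c \<in> components_in E (TT f x - {x})" using comps assms(1) by blast
  have C': "TT f c' \<in> components_in E (TT f x - {x})" using comps assms(2) by blast
  have "TT f c = TT f c'" using comp_noedge[OF symE C C' assms(4,5) e] .
  then have "c \<in> TT f c'" using TT_self[of c f] by simp
  then show False using child_eq[OF assms(1,2)] assms(3) by simp
qed

lemma child_nbr:
  assumes "f c = Some x"
  shows "\<exists>y\<in>TT f c. E x y"
proof -
  have xV: "x \<in> V" using in_V[OF assms] by simp
  have Q: "Qp x" using Qp_all[OF xV] .
  have C: "TT f c \<in> components_in E (TT f x - {x})" using Q assms by (auto simp: Qp_def)
  show ?thesis using conn_nbr[OF symE _ _ C] Q by (simp add: Qp_def)
qed

end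



locale rot = stree +
  fixes u v :: 'a
  assumes fv: "f v = Some u"
    and gST: "search_tree E V (rotate E f u v)"
begin

abbreviation "g \<equiv> rotate E f u v"

definition Lost :: "'a set" where
  "Lost = {y. \<exists>c. f c = Some v \<and> (\<forall>z\<in>TT f c. \<not> E u z) \<and> y \<in> TT f c}"

definition X :: "'a \<Rightarrow> 'a set" where
  "X y = (Anc f y - (if y = v \<or> y \<in> Lost then {u} else {})) \<union>
         (if y \<in> TT f u \<and> y \<notin> TT f v then {v} else {})"

lemma g_eq: "g y = (if y = v then f u else if y = u then Some v
     else if f y = Some v then (if (\<exists>z\<in>TT f y. E u z) then Some u else Some v) else f y)"
  unfolding rotate_def subtree_TT by simp

lemma uv: "u \<noteq> v" using child_ne[OF fv] by simp
lemma vTu: "v \<in> TT f u" using TT_child[of f v u, OF fv] .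
lemma uTv: "u \<notin> TT f v" using not_up[OF fv] .
lemma Ancv: "Anc f v = insert u (Anc f u)" using Anc_rec[of f v] fv by simp
lemma uAu: "u \<notin> Anc f u" using Anc_iff by simp
lemma Lost_sub: "Lost \<subseteq> TT f v"
proof
  fix y assume "y \<in> Lost"
  then obtain c where "f c = Some v" "y \<in> TT f c" unfolding Lost_def by blast
  then show "y \<in> TT f v" using TT_child_sub[of f c v] by blast
qed
lemma vLost: "v \<notin> Lost"
proof
  assume "v \<in> Lost"
  then obtain c where "f c = Some v" "v \<in> TT f c" unfolding Lost_def by blast
  then show False using not_up by blast
qed
lemma uLost: "u \<notin> Lost" using Lost_sub uTv by blast

lemma Xv: "X v = Anc f u"
  using Ancv uAu by (auto simp: X_def)

lemma step_lemma:
  assumes IH: "\<And>z. g y = Some z \<Longrightarrow> Anc g z = X z"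
  shows "Anc g y = X y"
proof -
  consider (yv) "y = v" | (yu) "y = u" | (ch) "y \<noteq> v" "y \<noteq> u" "f y = Some v"
    | (oth) "y \<noteq> v" "y \<noteq> u" "f y \<noteq> Some v" by blast
  then show ?thesis
  proof cases
    case yv
    show ?thesis
    proof (cases "f u")
      case None
      then have "Anc f u = {}" using Anc_rec[of f u] by simp
      moreover have "Anc g v = {}" using Anc_rec[of g v] None g_eq[of v] by simp
      ultimately show ?thesis using yv Xv by simp
    next
      case (Some w)
      have gv: "g v = Some w" using g_eq[of v] Some by simp
      have wv: "w \<noteq> v" using Some uTv TT_child[of f u w] by auto
      have wTu: "w \<notin> TT f u" using not_up[OF Some] .
      have wTv: "w \<notin> TT f v" using wTu TT_child_sub[of f v u, OF fv] by blast
      have wL: "w \<notin> Lost" using wTv Lost_sub by blast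
      have uAw: "u \<notin> Anc f w" using wTu Anc_iff by simp
      have Xw: "X w = Anc f w" using wv wL wTu uAw by (auto simp: X_def)
      have "Anc g v = insert w (Anc g w)" using Anc_rec[of g v] gv by simp
      also have "\<dots> = insert w (Anc f w)" using IH[of w] yv gv Xw by simp
      also have "\<dots> = Anc f u" using Anc_rec[of f u] Some by simp
      finally show ?thesis using yv Xv by simp
    qed
  next
    case yu
    have gu: "g u = Some v" using g_eq[of u] uv by simp
    have "Anc g u = insert v (Anc g v)" using Anc_rec[of g u] gu by simp
    also have "\<dots> = insert v (Anc f u)" using IH[of v] yu gu Xv by simp
    finally show ?thesis using yu uv uTv uLost by (auto simp: X_def)
  next
    case ch
    have Afy: "Anc f y = insert v (insert u (Anc f u))" using Anc_rec[of f y] ch(3) Ancv by simp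
    have yTv: "y \<in> TT f v" using TT_child[of f y v] ch(3) by simp
    show ?thesis
    proof (cases "\<exists>z\<in>TT f y. E u z")
      case True
      have gy: "g y = Some u" using g_eq[of y] ch True by simp
      have yL: "y \<notin> Lost"
      proof
        assume "y \<in> Lost"
        then obtain c where c: "f c = Some v" "\<forall>z\<in>TT f c. \<not> E u z" "y \<in> TT f c"
          unfolding Lost_def by blast
        have "y = c" using child_eq[OF ch(3) c(1) c(3)] .
        then show False using True c(2) by blast
      qed
      have "Anc g y = insert u (Anc g u)" using Anc_rec[of g y] gy by simp
      also have "\<dots> = insert u (X u)" using IH[of u] gy by simp
      also have "X u = insert v (Anc f u)" using uv uTv uLost by (auto simp: X_def)
      finally show ?thesis using yL yTv ch Afy by (auto simp: X_def)
    next
      case False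
      have gy: "g y = Some v" using g_eq[of y] ch False by simp
      have yL: "y \<in> Lost" unfolding Lost_def using ch(3) False TT_self[of y f] by blast
      have "Anc g y = insert v (Anc g v)" using Anc_rec[of g y] gy by simp
      also have "\<dots> = insert v (Anc f u)" using IH[of v] gy Xv by simp
      finally show ?thesis using yL yTv Afy uv uAu by (auto simp: X_def)
    qed
  next
    case oth
    have gy: "g y = f y" using g_eq[of y] oth by simp
    show ?thesis
    proof (cases "f y")
      case None
      have "Anc f y = {}" using Anc_rec[of f y] None by simp
      moreover have "Anc g y = {}" using Anc_rec[of g y] None gy by simp
      moreover have "y \<notin> TT f u" using TT_rec[of y f u] None oth by simp
      ultimately show ?thesis by (simp add: X_def)
    next
      case (Some z)
      have zv: "z \<noteq> v" using Some oth by simp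
      have Afy: "Anc f y = insert z (Anc f z)" using Anc_rec[of f y] Some by simp
      have Agy: "Anc g y = insert z (X z)" using Anc_rec[of g y] Some gy IH[of z] by simp
      show ?thesis
      proof (cases "z = u")
        case True
        have yTv: "y \<notin> TT f v"
        proof
          assume "y \<in> TT f v"
          then have "y = v" using child_eq[of y u v] Some True fv by simp
          then show False using oth by simp
        qed
        have yTu: "y \<in> TT f u" using TT_child[of f y u] Some True by simp
        have yL: "y \<notin> Lost" using yTv Lost_sub by blast
        have "X u = insert v (Anc f u)" using uv uTv uLost by (auto simp: X_def)
        then show ?thesis using Agy Afy True yTv yTu yL oth by (auto simp: X_def)
      next
        case False
        have e1: "y \<in> TT f u \<longleftrightarrow> z \<in> TT f u" using TT_rec[of y f u] Some oth by simp
        have e2: "y \<in> TT f v \<longleftrightarrow> z \<in> TT f v" using TT_rec[of y f v] Some oth by simp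
        have e3: "y \<in> Lost \<longleftrightarrow> z \<in> Lost"
        proof -
          have "y \<in> TT f c \<longleftrightarrow> z \<in> TT f c" if "f c = Some v" for c
            using TT_rec[of y f c] Some that oth by auto
          then show ?thesis unfolding Lost_def by blast
        qed
        show ?thesis using Agy Afy e1 e2 e3 False zv oth by (auto simp: X_def)
      qed
    qed
  qed
qed

lemma Anc_g: "Anc g y = X y"
proof -
  obtain rg where rg: "st E g V rg" "g rg = None" and outg: "\<forall>x. x \<notin> V \<longrightarrow> g x = None"
    using gST unfolding search_tree_def by blast
  show ?thesis
  proof (cases "y \<in> V")
    case False
    then have gn: "g y = None" using outg by simp
    show ?thesis by (rule step_lemma) (simp add: gn)
  next
    case True
    then have "(y, rg) \<in> (par g)\<^sup>*" using st_reach[OF rg(1)] by blast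
    then show ?thesis
    proof (induct rule: converse_rtrancl_induct)
      case base show ?case by (rule step_lemma) (simp add: rg(2))
    next
      case (step y z)
      show ?case by (rule step_lemma) (use step in simp)
    qed
  qed
qed

lemma R1: "x \<noteq> u \<Longrightarrow> x \<noteq> v \<Longrightarrow> x \<in> Anc g y \<longleftrightarrow> x \<in> Anc f y"
  by (simp add: Anc_g X_def)

lemma R2: "v \<in> Anc g y \<longleftrightarrow> v \<in> Anc f y \<or> (y \<in> TT f u \<and> y \<notin> TT f v)"
  using uv by (auto simp: Anc_g X_def)

lemma R3: "u \<in> Anc g y \<longleftrightarrow> u \<in> Anc f y \<and> y \<noteq> v \<and> y \<notin> Lost"
  using uv by (auto simp: Anc_g X_def)

end



section \<open>Potential\<close>

definition nd :: "nat \<Rightarrow> nat \<Rightarrow> nat" where "nd a b = (a - b) + (b - a)"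

definition tt :: "(nat \<Rightarrow> nat) \<Rightarrow> (nat \<Rightarrow> nat) \<Rightarrow> nat set \<Rightarrow> nat \<Rightarrow> nat" where
  "tt m Nn Z i = (if i \<in> Z then Nn i + m i else nd (Nn i) (m i))"

definition FF :: "nat \<Rightarrow> (nat \<Rightarrow> nat) \<Rightarrow> (nat \<Rightarrow> nat) \<Rightarrow> (nat \<times> nat) set \<Rightarrow> nat set \<Rightarrow> nat" where
  "FF q m Nn W Z = 2 * (\<Sum>i<q. tt m Nn Z i) + card {(i, j). (i, j) \<in> W \<and> \<not> (i \<in> Z \<and> j \<in> Z)}"

definition PhiA :: "nat \<Rightarrow> (nat \<Rightarrow> nat) \<Rightarrow> (nat \<Rightarrow> nat) \<Rightarrow> (nat \<times> nat) set \<Rightarrow> nat" where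
  "PhiA q m Nn W = Min ((\<lambda>Z. FF q m Nn W Z) ` Pow {..<q})"

lemma PhiA_le:
  assumes "\<forall>Z\<in>Pow {..<q}. \<exists>Z'\<in>Pow {..<q}. FF q m N2 W2 Z' \<le> FF q m N1 W1 Z + 2"
  shows "PhiA q m N2 W2 \<le> PhiA q m N1 W1 + 2"
proof -
  have fin: "finite ((\<lambda>Z. FF q m N1 W1 Z) ` Pow {..<q})" by simp
  have ne: "(\<lambda>Z. FF q m N1 W1 Z) ` Pow {..<q} \<noteq> {}" by blast
  obtain Z0 where Z0: "Z0 \<in> Pow {..<q}" "PhiA q m N1 W1 = FF q m N1 W1 Z0"
    using Min_in[OF fin ne] unfolding PhiA_def by auto
  obtain Z' where Z': "Z' \<in> Pow {..<q}" "FF q m N2 W2 Z' \<le> FF q m N1 W1 Z0 + 2"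
    using assms Z0(1) by blast
  have "PhiA q m N2 W2 \<le> FF q m N2 W2 Z'"
    unfolding PhiA_def using Z'(1) by (intro Min_le) auto
  then show ?thesis using Z' Z0 by simp
qed

lemma PhiA_le_FF: "Z \<subseteq> {..<q} \<Longrightarrow> PhiA q m Nn W \<le> FF q m Nn W Z"
  unfolding PhiA_def by (intro Min_le) auto

lemma PhiA_ge:
  assumes "\<And>Z. Z \<subseteq> {..<q} \<Longrightarrow> c \<le> FF q m Nn W Z"
  shows "c \<le> PhiA q m Nn W"
proof -
  have fin: "finite ((\<lambda>Z. FF q m Nn W Z) ` Pow {..<q})" by simp
  have ne: "(\<lambda>Z. FF q m Nn W Z) ` Pow {..<q} \<noteq> {}" by blast
  show ?thesis unfolding PhiA_def using assms by (subst Min_ge_iff[OF fin ne]) auto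
qed

lemma FF_type1:
  assumes N: "\<forall>i<q. N1 i = N2 i"
    and W2: "W2 \<subseteq> {..<q} \<times> {..<q}"
    and W: "\<forall>i j. (i, j) \<noteq> (i0, j0) \<and> (i, j) \<noteq> (j0, i0) \<longrightarrow> ((i, j) \<in> W1 \<longleftrightarrow> (i, j) \<in> W2)"
  shows "FF q m N1 W1 Z \<le> FF q m N2 W2 Z + 2"
proof -
  have s: "(\<Sum>i<q. tt m N1 Z i) = (\<Sum>i<q. tt m N2 Z i)"
    using N by (intro sum.cong) (auto simp: tt_def)
  have fin: "finite {(i, j). (i, j) \<in> W2 \<and> \<not> (i \<in> Z \<and> j \<in> Z)}"
    by (rule finite_subset[of _ "{..<q} \<times> {..<q}"]) (use W2 in auto)
  have A: "card {(i, j). (i, j) \<in> W1 \<and> \<not> (i \<in> Z \<and> j \<in> Z)}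
        \<le> card ({(i, j). (i, j) \<in> W2 \<and> \<not> (i \<in> Z \<and> j \<in> Z)} \<union> {(i0, j0), (j0, i0)})"
    by (rule card_mono) (use fin W in auto)
  have B: "card ({(i, j). (i, j) \<in> W2 \<and> \<not> (i \<in> Z \<and> j \<in> Z)} \<union> {(i0, j0), (j0, i0)})
     \<le> card {(i, j). (i, j) \<in> W2 \<and> \<not> (i \<in> Z \<and> j \<in> Z)} + card {(i0, j0), (j0, i0)}"
    by (rule card_Un_le)
  have C: "card {(i0, j0), (j0, i0)} \<le> 2"
    apply (cases "i0 = j0")
     apply simp
    apply (simp add: card_insert_if)
    done
  have "card {(i, j). (i, j) \<in> W1 \<and> \<not> (i \<in> Z \<and> j \<in> Z)}
      \<le> card {(i, j). (i, j) \<in> W2 \<and> \<not> (i \<in> Z \<and> j \<in> Z)} + 2"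
    using A B C by linarith
  then show ?thesis unfolding FF_def using s by simp
qed

lemma FF_type2:
  assumes b0: "b0 < q"
    and N: "\<forall>i<q. i \<noteq> b0 \<longrightarrow> N1 i = N2 i" and Nb: "nd (N1 b0) (N2 b0) \<le> 1"
    and Ws: "Ws \<subseteq> {..<q}" and N0: "\<forall>i\<in>Ws. N2 i = 0"
    and W1: "W1 \<subseteq> {..<q} \<times> {..<q}" and W2: "W2 \<subseteq> {..<q} \<times> {..<q}"
    and W: "\<forall>i j. \<not> (i \<in> Ws \<and> j \<in> Ws) \<longrightarrow> ((i, j) \<in> W1 \<longleftrightarrow> (i, j) \<in> W2)"
  shows "FF q m N2 W2 (Z \<union> Ws) \<le> FF q m N1 W1 Z + 2"
    and "FF q m N1 W1 (Z \<union> Ws) \<le> FF q m N2 W2 Z + 2"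
proof -
  have le1: "N2 i \<le> N1 i + (if i = b0 then 1 else 0)" if "i < q" for i
    using N Nb that unfolding nd_def by (cases "i = b0") auto
  have le2: "N1 i \<le> N2 i + (if i = b0 then 1 else 0)" if "i < q" for i
    using N Nb that unfolding nd_def by (cases "i = b0") auto
  have t1: "tt m N2 (Z \<union> Ws) i \<le> tt m N1 Z i + (if i = b0 then 1 else 0)" if "i < q" for i
    using le1[OF that] le2[OF that] N0 unfolding tt_def nd_def
    by (cases "i \<in> Ws"; cases "i = b0"; cases "i \<in> Z") auto
  have t2: "tt m N1 (Z \<union> Ws) i \<le> tt m N2 Z i + (if i = b0 then 1 else 0)" if "i < q" for i
    using le1[OF that] le2[OF that] N0 unfolding tt_def nd_def
    by (cases "i \<in> Ws"; cases "i = b0"; cases "i \<in> Z") auto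
  have s1: "(\<Sum>i<q. tt m N2 (Z \<union> Ws) i) \<le> (\<Sum>i<q. tt m N1 Z i) + 1"
  proof -
    have "(\<Sum>i<q. tt m N2 (Z \<union> Ws) i) \<le> (\<Sum>i<q. tt m N1 Z i + (if i = b0 then 1 else 0))"
      using t1 by (intro sum_mono) auto
    also have "\<dots> = (\<Sum>i<q. tt m N1 Z i) + (\<Sum>i<q. (if i = b0 then 1 else 0))" by (rule sum.distrib)
    also have "(\<Sum>i<q. (if i = b0 then 1 else 0)) = (1::nat)" using b0 by (subst sum.delta) auto
    finally show ?thesis .
  qed
  have s2: "(\<Sum>i<q. tt m N1 (Z \<union> Ws) i) \<le> (\<Sum>i<q. tt m N2 Z i) + 1"
  proof -
    have "(\<Sum>i<q. tt m N1 (Z \<union> Ws) i) \<le> (\<Sum>i<q. tt m N2 Z i + (if i = b0 then 1 else 0))"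
      using t2 by (intro sum_mono) auto
    also have "\<dots> = (\<Sum>i<q. tt m N2 Z i) + (\<Sum>i<q. (if i = b0 then 1 else 0))" by (rule sum.distrib)
    also have "(\<Sum>i<q. (if i = b0 then 1 else 0)) = (1::nat)" using b0 by (subst sum.delta) auto
    finally show ?thesis .
  qed
  have fin1: "finite {(i, j). (i, j) \<in> W1 \<and> \<not> (i \<in> Z \<and> j \<in> Z)}"
    by (rule finite_subset[of _ "{..<q} \<times> {..<q}"]) (use W1 in auto)
  have fin2: "finite {(i, j). (i, j) \<in> W2 \<and> \<not> (i \<in> Z \<and> j \<in> Z)}"
    by (rule finite_subset[of _ "{..<q} \<times> {..<q}"]) (use W2 in auto)
  have c1: "card {(i, j). (i, j) \<in> W2 \<and> \<not> (i \<in> Z \<union> Ws \<and> j \<in> Z \<union> Ws)}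
     \<le> card {(i, j). (i, j) \<in> W1 \<and> \<not> (i \<in> Z \<and> j \<in> Z)}"
    by (rule card_mono[OF fin1]) (use W in auto)
  have c2: "card {(i, j). (i, j) \<in> W1 \<and> \<not> (i \<in> Z \<union> Ws \<and> j \<in> Z \<union> Ws)}
     \<le> card {(i, j). (i, j) \<in> W2 \<and> \<not> (i \<in> Z \<and> j \<in> Z)}"
    by (rule card_mono[OF fin2]) (use W in auto)
  show "FF q m N2 W2 (Z \<union> Ws) \<le> FF q m N1 W1 Z + 2" unfolding FF_def using s1 c1 by simp
  show "FF q m N1 W1 (Z \<union> Ws) \<le> FF q m N2 W2 Z + 2" unfolding FF_def using s2 c2 by simp
qed



definition NN :: "nat \<Rightarrow> (nat + nat \<Rightarrow> (nat + nat) option) \<Rightarrow> nat \<Rightarrow> nat" where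
  "NN p h i = card {j. j < p \<and> Inr i \<in> Anc h (Inl j)}"

definition WW :: "nat \<Rightarrow> (nat + nat \<Rightarrow> (nat + nat) option) \<Rightarrow> (nat \<times> nat) set" where
  "WW q h = {(i, j). i < q \<and> j < q \<and> i \<noteq> j \<and> Inr (max i j) \<notin> Anc h (Inr (min i j))}"

definition Phi :: "nat \<Rightarrow> nat \<Rightarrow> (nat \<Rightarrow> nat) \<Rightarrow> (nat + nat \<Rightarrow> (nat + nat) option) \<Rightarrow> nat" where
  "Phi p q m h = PhiA q m (NN p h) (WW q h)"

lemma WW_sub: "WW q h \<subseteq> {..<q} \<times> {..<q}"
  unfolding WW_def by auto

lemma Kadj[simp]: "Kpq_adj (Inl a) (Inr b)" "Kpq_adj (Inr b) (Inl a)"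
  "\<not> Kpq_adj (Inl a) (Inl a')" "\<not> Kpq_adj (Inr b) (Inr b')"
  by (auto simp: Kpq_adj_def)

lemma Ksym: "\<forall>x y. Kpq_adj x y = Kpq_adj y x"
  by (auto simp: Kpq_adj_def)

lemma K_V: "x \<in> Kpq_verts p q \<longleftrightarrow> (\<exists>j. j < p \<and> x = Inl j) \<or> (\<exists>i. i < q \<and> x = Inr i)"
  unfolding Kpq_verts_def by auto

lemma K_conn:
  assumes "Inl a \<in> S" "Inr b \<in> S"
  shows "connected_in Kpq_adj S"
proof -
  have "reach_in Kpq_adj S x y" if "x \<in> S" "y \<in> S" for x y
  proof (cases x)
    case (Inl x1)
    show ?thesis
    proof (cases y)
      case (Inl y1)
      have "reach_in Kpq_adj S x (Inr b)" using reach_edge[of x S "Inr b" Kpq_adj] that assms \<open>x = Inl x1\<close> by simp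
      moreover have "reach_in Kpq_adj S (Inr b) y" using reach_edge[of "Inr b" S y Kpq_adj] that assms \<open>y = Inl y1\<close> by simp
      ultimately show ?thesis using reach_trans by metis
    next
      case (Inr y1)
      then show ?thesis using reach_edge[of x S y Kpq_adj] that \<open>x = Inl x1\<close> by simp
    qed
  next
    case (Inr x1)
    show ?thesis
    proof (cases y)
      case (Inr y1)
      have "reach_in Kpq_adj S x (Inl a)" using reach_edge[of x S "Inl a" Kpq_adj] that assms \<open>x = Inr x1\<close> by simp
      moreover have "reach_in Kpq_adj S (Inl a) y" using reach_edge[of "Inl a" S y Kpq_adj] that assms Inr by simp
      ultimately show ?thesis using reach_trans by metis
    next
      case (Inl y1)
      then show ?thesis using reach_edge[of x S y Kpq_adj] that \<open>x = Inr x1\<close> by simp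
    qed
  qed
  then show ?thesis unfolding connected_in_def using assms by auto
qed

lemma K_connV: "0 < p \<Longrightarrow> 0 < q \<Longrightarrow> connected_in Kpq_adj (Kpq_verts p q)"
  by (rule K_conn[of 0 _ 0]) (auto simp: Kpq_verts_def)

locale krot = rot Kpq_adj "Kpq_verts p q" f r u v for p q f r u v

begin

abbreviation "Sg i \<equiv> {j. j < p \<and> Inr i \<in> Anc g (Inl j)}"
abbreviation "Sf i \<equiv> {j. j < p \<and> Inr i \<in> Anc f (Inl j)}"

lemma NN_g: "NN p g i = card (Sg i)" by (simp add: NN_def)
lemma NN_f: "NN p f i = card (Sf i)" by (simp add: NN_def)

lemma uV: "u \<in> Kpq_verts p q" using in_V[OF fv] by simp
lemma vV: "v \<in> Kpq_verts p q" using in_V[OF fv] by simp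

lemma N_other: "Inr i \<noteq> u \<Longrightarrow> Inr i \<noteq> v \<Longrightarrow> NN p g i = NN p f i"
  unfolding NN_def using R1 by simp

lemma W_other:
  assumes "Inr (max i j) \<noteq> u" "Inr (max i j) \<noteq> v"
  shows "(i, j) \<in> WW q g \<longleftrightarrow> (i, j) \<in> WW q f"
  unfolding WW_def using R1[OF assms] by simp

lemma Lost_nbr: "y \<in> Lost \<Longrightarrow> \<not> Kpq_adj u y"
  unfolding Lost_def by auto

lemma finS: "finite {j. j < p \<and> P j}" by simp

lemma Phi_both:
  assumes "\<forall>Z\<in>Pow {..<q}. \<exists>Z'\<in>Pow {..<q}. FF q m (NN p g) (WW q g) Z' \<le> FF q m (NN p f) (WW q f) Z + 2"
    "\<forall>Z\<in>Pow {..<q}. \<exists>Z'\<in>Pow {..<q}. FF q m (NN p f) (WW q f) Z' \<le> FF q m (NN p g) (WW q g) Z + 2"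
  shows "Phi p q m g \<le> Phi p q m f + 2 \<and> Phi p q m f \<le> Phi p q m g + 2"
  unfolding Phi_def using PhiA_le[OF assms(1)] PhiA_le[OF assms(2)] by simp

lemma type1_concl:
  assumes N: "\<forall>i<q. NN p f i = NN p g i"
    and W: "\<forall>i j. (i, j) \<noteq> (i0, j0) \<and> (i, j) \<noteq> (j0, i0) \<longrightarrow> ((i, j) \<in> WW q f \<longleftrightarrow> (i, j) \<in> WW q g)"
  shows "Phi p q m g \<le> Phi p q m f + 2 \<and> Phi p q m f \<le> Phi p q m g + 2"
proof (rule Phi_both)
  show "\<forall>Z\<in>Pow {..<q}. \<exists>Z'\<in>Pow {..<q}. FF q m (NN p g) (WW q g) Z' \<le> FF q m (NN p f) (WW q f) Z + 2"
    using FF_type1[of q "NN p g" "NN p f" "WW q f" i0 j0 "WW q g" m] N W WW_sub by auto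
  show "\<forall>Z\<in>Pow {..<q}. \<exists>Z'\<in>Pow {..<q}. FF q m (NN p f) (WW q f) Z' \<le> FF q m (NN p g) (WW q g) Z + 2"
    using FF_type1[of q "NN p f" "NN p g" "WW q g" i0 j0 "WW q f" m] N W WW_sub by auto
qed

lemma type2_concl:
  assumes b0: "b0 < q"
    and N: "\<forall>i<q. i \<noteq> b0 \<longrightarrow> N1 i = N2 i" and Nb: "nd (N1 b0) (N2 b0) \<le> 1"
    and Ws: "Ws \<subseteq> {..<q}" and N0: "\<forall>i\<in>Ws. N2 i = 0"
    and W: "\<forall>i j. \<not> (i \<in> Ws \<and> j \<in> Ws) \<longrightarrow> ((i, j) \<in> W1 \<longleftrightarrow> (i, j) \<in> W2)"
    and fg: "(N1 = NN p f \<and> N2 = NN p g \<and> W1 = WW q f \<and> W2 = WW q g) \<or>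
             (N1 = NN p g \<and> N2 = NN p f \<and> W1 = WW q g \<and> W2 = WW q f)"
  shows "Phi p q m g \<le> Phi p q m f + 2 \<and> Phi p q m f \<le> Phi p q m g + 2"
proof -
  have W1: "W1 \<subseteq> {..<q} \<times> {..<q}" "W2 \<subseteq> {..<q} \<times> {..<q}" using fg WW_sub by auto
  have A: "FF q m N2 W2 (Z \<union> Ws) \<le> FF q m N1 W1 Z + 2" "FF q m N1 W1 (Z \<union> Ws) \<le> FF q m N2 W2 Z + 2"
    for Z using FF_type2[OF b0 N Nb Ws N0 W1 W] by auto
  have ZW: "Z \<in> Pow {..<q} \<Longrightarrow> Z \<union> Ws \<in> Pow {..<q}" for Z using Ws by auto
  show ?thesis
    by (rule Phi_both) (use fg A ZW in blast)+
qed

end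



context krot begin

lemma case_LL:
  assumes "u = Inl a" "v = Inl a'"
  shows "Phi p q m g \<le> Phi p q m f + 2 \<and> Phi p q m f \<le> Phi p q m g + 2"
proof (rule type1_concl[of 0 0])
  show "\<forall>i<q. NN p f i = NN p g i" using N_other assms by simp
  show "\<forall>i j. (i, j) \<noteq> (0, 0) \<and> (i, j) \<noteq> (0, 0) \<longrightarrow> ((i, j) \<in> WW q f) = ((i, j) \<in> WW q g)"
    using W_other assms by simp
qed

lemma case_RR:
  assumes u: "u = Inr iu" and v: "v = Inr iv"
  shows "Phi p q m g \<le> Phi p q m f + 2 \<and> Phi p q m f \<le> Phi p q m g + 2"
proof -
  have L0: "Lost = {}"
  proof (rule ccontr)
    assume "Lost \<noteq> {}"
    then obtain y c where c: "f c = Some v" "\<forall>z\<in>TT f c. \<not> Kpq_adj u z" "y \<in> TT f c"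
      unfolding Lost_def by blast
    obtain z where z: "z \<in> TT f c" "Kpq_adj v z" using child_nbr[OF c(1)] by blast
    have "Kpq_adj u z" using z(2) u v by (auto simp: Kpq_adj_def)
    then show False using c(2) z(1) by blast
  qed
  have only: "c = v" if fc: "f c = Some u" for c
  proof (rule ccontr)
    assume cv: "c \<noteq> v"
    obtain z where z: "z \<in> TT f c" "Kpq_adj u z" using child_nbr[OF fc] by blast
    have "\<not> Kpq_adj z v" using sib_noedge[OF fc fv cv z(1) TT_self] .
    then show False using z(2) u v by (auto simp: Kpq_adj_def)
  qed
  have TTuv: "y = u" if yy: "y \<in> TT f u" "y \<notin> TT f v" for y
  proof (rule ccontr)
    assume "y \<noteq> u"
    then obtain c where "f c = Some u" "y \<in> TT f c" using desc_child[OF yy(1)] by blast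
    then show False using only yy(2) by blast
  qed
  show ?thesis
  proof (rule type1_concl[of iu iv])
    show "\<forall>i<q. NN p f i = NN p g i"
    proof (intro allI impI)
      fix i assume "i < q"
      have "Inr i \<in> Anc g (Inl j) \<longleftrightarrow> Inr i \<in> Anc f (Inl j)" for j
      proof -
        consider "Inr i = u" | "Inr i = v" | "Inr i \<noteq> u" "Inr i \<noteq> v" by blast
        then show ?thesis
        proof cases
          case 1 then show ?thesis using R3[of "Inl j"] L0 v by simp
        next
          case 2 then show ?thesis using R2[of "Inl j"] TTuv[of "Inl j"] u by auto
        next
          case 3 then show ?thesis using R1 by simp
        qed
      qed
      then show "NN p f i = NN p g i" unfolding NN_def by simp
    qed
    show "\<forall>i j. (i, j) \<noteq> (iu, iv) \<and> (i, j) \<noteq> (iv, iu) \<longrightarrow> ((i, j) \<in> WW q f) = ((i, j) \<in> WW q g)"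
    proof (intro allI impI)
      fix i j assume ij: "(i, j) \<noteq> (iu, iv) \<and> (i, j) \<noteq> (iv, iu)"
      show "((i, j) \<in> WW q f) = ((i, j) \<in> WW q g)"
      proof (cases "i = j")
        case True then show ?thesis by (simp add: WW_def)
      next
        case False
        define x :: "nat + nat" where "x = Inr (max i j)"
        define y :: "nat + nat" where "y = Inr (min i j)"
        have "x \<in> Anc g y \<longleftrightarrow> x \<in> Anc f y"
        proof -
          consider "x = u" | "x = v" | "x \<noteq> u" "x \<noteq> v" by blast
          then show ?thesis
          proof cases
            case 1
            have "y \<noteq> v" using 1 ij False u v unfolding x_def y_def by (auto simp: max_def min_def split: if_splits)
            then show ?thesis using R3[of y] L0 1 by simp
          next
            case 2
            have "y \<noteq> u" using 2 ij False u v unfolding x_def y_def by (auto simp: max_def min_def split: if_splits)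
            then show ?thesis using R2[of y] TTuv[of y] 2 by auto
          next
            case 3 then show ?thesis using R1 by simp
          qed
        qed
        then show ?thesis unfolding WW_def x_def y_def by auto
      qed
    qed
  qed
qed

lemma case_RL:
  assumes u: "u = Inr iu" and v: "v = Inl a"
  shows "Phi p q m g \<le> Phi p q m f + 2 \<and> Phi p q m f \<le> Phi p q m g + 2"
proof -
  have iu: "iu < q" using uV u by (simp add: K_V)
  have ap: "a < p" using vV v by (simp add: K_V)
  have LnoL: "\<not> isl y" if "y \<in> Lost" for y
    using Lost_nbr[OF that] u by (auto simp: Kpq_adj_def)
  have Sgu: "Sg iu = Sf iu - {a}"
  proof -
    have "Inr iu \<in> Anc g (Inl j) \<longleftrightarrow> Inr iu \<in> Anc f (Inl j) \<and> j \<noteq> a" for j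
      using R3[of "Inl j"] LnoL[of "Inl j"] u v by auto
    then show ?thesis by auto
  qed
  have aS: "a \<in> Sf iu" using ap Anc_iff[of u v] vTu uv u v by simp
  have Nu: "nd (NN p f iu) (NN p g iu) \<le> 1"
  proof -
    have "card (Sg iu) = card (Sf iu) - 1" using Sgu aS by simp
    moreover have "card (Sf iu) \<ge> 1"
    proof -
      have "finite (Sf iu)" by simp
      then have "card (Sf iu) > 0" using aS card_gt_0_iff by blast
      then show ?thesis by simp
    qed
    ultimately show ?thesis unfolding nd_def NN_def by simp
  qed
  define Ws where "Ws = (if Lost = {} then {} else insert iu {i. i < q \<and> Inr i \<in> Lost})"
  have Ws_sub: "Ws \<subseteq> {..<q}" unfolding Ws_def using iu by auto
  have Nother: "\<forall>i<q. i \<noteq> iu \<longrightarrow> NN p f i = NN p g i"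
    using N_other u v by simp
  have Wagree: "\<forall>i j. \<not> (i \<in> Ws \<and> j \<in> Ws) \<longrightarrow> ((i, j) \<in> WW q f \<longleftrightarrow> (i, j) \<in> WW q g)"
  proof (intro allI impI)
    fix i j assume nW: "\<not> (i \<in> Ws \<and> j \<in> Ws)"
    show "((i, j) \<in> WW q f) = ((i, j) \<in> WW q g)"
    proof (cases "i < q \<and> j < q \<and> i \<noteq> j")
      case False then show ?thesis by (auto simp: WW_def)
    next
      case True
      define x :: "nat + nat" where "x = Inr (max i j)"
      define y :: "nat + nat" where "y = Inr (min i j)"
      have "x \<in> Anc g y \<longleftrightarrow> x \<in> Anc f y"
      proof (cases "x = u")
        case False then show ?thesis using R1[of x y] v unfolding x_def by simp
      next
        case True
        have "y \<notin> Lost"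
        proof
          assume yL: "y \<in> Lost"
          then have "Lost \<noteq> {}" by blast
          then have "max i j \<in> Ws" "min i j \<in> Ws" using True yL u \<open>i < q \<and> j < q \<and> i \<noteq> j\<close>
            unfolding Ws_def x_def y_def by (auto simp: max_def min_def)
          then show False using nW by (auto simp: max_def min_def split: if_splits)
        qed
        moreover have "y \<noteq> v" using v unfolding y_def by simp
        ultimately show ?thesis using R3[of y] True by simp
      qed
      then show ?thesis unfolding WW_def x_def y_def by auto
    qed
  qed
  have N0: "\<forall>i\<in>Ws. NN p g i = 0"
  proof (cases "Lost = {}")
    case True then show ?thesis unfolding Ws_def by simp
  next
    case False
    then obtain y0 c0 where c0: "f c0 = Some v" "\<forall>z\<in>TT f c0. \<not> Kpq_adj u z" "y0 \<in> TT f c0"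
      unfolding Lost_def by blast
    have y0L: "y0 \<in> Lost" unfolding Lost_def using c0 by blast
    have y0v: "y0 \<in> TT f v" using y0L Lost_sub by blast
    have y0r: "\<not> isl y0" using LnoL[OF y0L] .
    have adj0: "Kpq_adj (Inl j) y0" for j using y0r by (simp add: Kpq_adj_def)
    have Sgu0: "Sg iu = {}"
    proof -
      have "Inl j = v" if jA: "Inr iu \<in> Anc f (Inl j)" for j
      proof -
        have jT: "Inl j \<in> TT f u" "Inl j \<noteq> u" using jA u Anc_iff by auto
        obtain c' where c': "f c' = Some u" "Inl j \<in> TT f c'" using desc_child[OF jT] by blast
        have c'v: "c' = v"
        proof (rule ccontr)
          assume "c' \<noteq> v"
          then show False using sib_noedge[OF c'(1) fv _ c'(2) y0v] adj0 by blast
        qed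
        show "Inl j = v"
        proof (rule ccontr)
          assume jv: "Inl j \<noteq> v"
          obtain c'' where c'': "f c'' = Some v" "Inl j \<in> TT f c''" using desc_child[of "Inl j" f v] c'(2) c'v jv by blast
          have "c'' \<noteq> c0" using c'' c0(2) u by (auto simp: Kpq_adj_def)
          then show False using sib_noedge[OF c''(1) c0(1) _ c''(2) c0(3)] adj0 by blast
        qed
      qed
      then show ?thesis using Sgu v by auto
    qed
    have SgL: "Sg i = {}" if iL: "Inr i \<in> Lost" for i
    proof -
      have iu': "Inr i \<noteq> u" using iL uLost by blast
      obtain c where c: "f c = Some v" "\<forall>z\<in>TT f c. \<not> Kpq_adj u z" "Inr i \<in> TT f c"
        using iL unfolding Lost_def by blast
      have "\<not> Inr i \<in> Anc f (Inl j)" for j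
      proof
        assume "Inr i \<in> Anc f (Inl j)"
        then have "Inl j \<in> TT f (Inr i)" using Anc_iff by simp
        then have "Inl j \<in> TT f c" by (rule TT_trans[OF _ c(3)])
        then show False using c(2) u Kadj(2)[of iu j] by blast
      qed
      then show ?thesis using R1[of "Inr i"] iu' v by simp
    qed
    show ?thesis unfolding Ws_def using False Sgu0 SgL NN_g by auto
  qed
  show ?thesis
    by (rule type2_concl[OF iu Nother Nu Ws_sub N0 Wagree]) simp
qed

lemma case_LR:
  assumes u: "u = Inl a" and v: "v = Inr iv"
  shows "Phi p q m g \<le> Phi p q m f + 2 \<and> Phi p q m f \<le> Phi p q m g + 2"
proof -
  have iv: "iv < q" using vV v by (simp add: K_V)
  have ap: "a < p" using uV u by (simp add: K_V)
  have otherA: "Inl j = u" if jj: "Inl j \<in> TT f u" "Inl j \<notin> TT f v" for j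
  proof (rule ccontr)
    assume ju: "Inl j \<noteq> u"
    obtain c' where c': "f c' = Some u" "Inl j \<in> TT f c'" using desc_child[OF jj(1) ju] by blast
    have "c' \<noteq> v" using c'(2) jj(2) by blast
    then show False using sib_noedge[OF c'(1) fv _ c'(2) TT_self] v by simp
  qed
  have Sgv: "Sg iv = insert a (Sf iv)"
  proof -
    have "Inr iv \<in> Anc g (Inl j) \<longleftrightarrow> Inr iv \<in> Anc f (Inl j) \<or> j = a" for j
      using R2[of "Inl j"] otherA[of j] uTv u v by auto
    then show ?thesis using ap by auto
  qed
  have aS: "a \<notin> Sf iv"
  proof
    assume "a \<in> Sf iv"
    then have "u \<in> TT f v" using Anc_iff u v by simp
    then show False using uTv by simp
  qed
  have Nv: "nd (NN p g iv) (NN p f iv) \<le> 1"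
  proof -
    have "card (Sg iv) = Suc (card (Sf iv))" using Sgv aS by simp
    then show ?thesis unfolding nd_def NN_def by simp
  qed
  define G where "G = {i. i < q \<and> Inr i \<in> TT f u \<and> Inr i \<notin> TT f v}"
  define Ws where "Ws = (if G = {} then {} else insert iv G)"
  have Ws_sub: "Ws \<subseteq> {..<q}" unfolding Ws_def G_def using iv by auto
  have Nother: "\<forall>i<q. i \<noteq> iv \<longrightarrow> NN p g i = NN p f i"
    using N_other u v by simp
  have Wagree: "\<forall>i j. \<not> (i \<in> Ws \<and> j \<in> Ws) \<longrightarrow> ((i, j) \<in> WW q g \<longleftrightarrow> (i, j) \<in> WW q f)"
  proof (intro allI impI)
    fix i j assume nW: "\<not> (i \<in> Ws \<and> j \<in> Ws)"
    show "((i, j) \<in> WW q g) = ((i, j) \<in> WW q f)"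
    proof (cases "i < q \<and> j < q \<and> i \<noteq> j")
      case False then show ?thesis by (auto simp: WW_def)
    next
      case True
      define x :: "nat + nat" where "x = Inr (max i j)"
      define y :: "nat + nat" where "y = Inr (min i j)"
      have "x \<in> Anc g y \<longleftrightarrow> x \<in> Anc f y"
      proof (cases "x = v")
        case False then show ?thesis using R1[of x y] u unfolding x_def by simp
      next
        case True
        have "\<not> (y \<in> TT f u \<and> y \<notin> TT f v)"
        proof
          assume yG: "y \<in> TT f u \<and> y \<notin> TT f v"
          then have "min i j \<in> G" unfolding G_def y_def using \<open>i < q \<and> j < q \<and> i \<noteq> j\<close> by auto
          then have "min i j \<in> Ws" "max i j \<in> Ws" using True v unfolding Ws_def x_def by auto
          then show False using nW by (auto simp: max_def min_def split: if_splits)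
        qed
        then show ?thesis using R2[of y] True by blast
      qed
      then show ?thesis unfolding WW_def x_def y_def by auto
    qed
  qed
  have N0: "\<forall>i\<in>Ws. NN p f i = 0"
  proof (cases "G = {}")
    case True then show ?thesis unfolding Ws_def by simp
  next
    case False
    have inG: "\<exists>c'. f c' = Some u \<and> c' \<noteq> v \<and> Inr i \<in> TT f c'" if iG: "i \<in> G" for i
    proof -
      have iT: "Inr i \<in> TT f u" "Inr i \<notin> TT f v" using iG unfolding G_def by auto
      have "Inr i \<noteq> u" using u by simp
      then obtain c' where c': "f c' = Some u" "Inr i \<in> TT f c'" using desc_child[OF iT(1)] by blast
      have "c' \<noteq> v" using c'(2) iT(2) by blast
      then show ?thesis using c' by blast
    qed
    obtain i0 where i0: "i0 \<in> G" using False by blast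
    obtain c0 where c0: "f c0 = Some u" "c0 \<noteq> v" "Inr i0 \<in> TT f c0" using inG[OF i0] by blast
    have Sfv: "Sf iv = {}"
    proof -
      have "\<not> Inr iv \<in> Anc f (Inl j)" for j
      proof
        assume "Inr iv \<in> Anc f (Inl j)"
        then have jv: "Inl j \<in> TT f v" using Anc_iff v by simp
        have "c0 \<noteq> v" by fact
        then show False using sib_noedge[OF fv c0(1) _ jv c0(3)] by simp
      qed
      then show ?thesis by simp
    qed
    have SfG: "Sf i = {}" if iG: "i \<in> G" for i
    proof -
      obtain c' where c': "f c' = Some u" "c' \<noteq> v" "Inr i \<in> TT f c'" using inG[OF iG] by blast
      have "\<not> Inr i \<in> Anc f (Inl j)" for j
      proof
        assume "Inr i \<in> Anc f (Inl j)"
        then have "Inl j \<in> TT f (Inr i)" using Anc_iff by simp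
        then have jc: "Inl j \<in> TT f c'" by (rule TT_trans[OF _ c'(3)])
        show False using sib_noedge[OF c'(1) fv c'(2) jc TT_self] v by simp
      qed
      then show ?thesis by simp
    qed
    show ?thesis unfolding Ws_def using False Sfv SfG NN_f by auto
  qed
  show ?thesis
    by (rule type2_concl[OF iv Nother Nv Ws_sub N0 Wagree]) simp
qed

lemma lip_krot: "Phi p q m g \<le> Phi p q m f + 2 \<and> Phi p q m f \<le> Phi p q m g + 2"
proof (cases u)
  case (Inl a)
  show ?thesis
  proof (cases v)
    case (Inl a') then show ?thesis using case_LL \<open>u = Inl a\<close> by blast
  next
    case (Inr b) then show ?thesis using case_LR \<open>u = Inl a\<close> by blast
  qed
next
  case (Inr b)
  show ?thesis
  proof (cases v)
    case (Inl a') then show ?thesis using case_RL \<open>u = Inr b\<close> by blast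
  next
    case (Inr b') then show ?thesis using case_RR \<open>u = Inr b\<close> by blast
  qed
qed

end




lemma key_ineq:
  fixes k q r c :: nat
  assumes kq: "k \<le> q" and r1: "1 \<le> r" and rq: "r \<le> q" and rc: "r \<le> 4 * c + 1"
    and big: "q * (q - 1) \<le> 4 * (c * q + (q - r))"
  shows "k * (k - 1) \<le> 4 * (c * k + (k - r))"
proof (cases "k \<le> r")
  case True
  have "k - 1 \<le> 4 * c" using True rc by simp
  then have "k * (k - 1) \<le> k * (4 * c)" by (rule mult_left_mono) simp
  then show ?thesis by (simp add: algebra_simps)
next
  case False
  define K where "K = int k"
  define Q where "Q = int q"
  define R where "R = int r"
  define C where "C = int c"
  have KR: "K > R" using False unfolding K_def R_def by simp
  have KQ: "K \<le> Q" using kq unfolding K_def Q_def by simp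
  have R1: "R \<ge> 1" using r1 unfolding R_def by simp
  have RC: "R \<le> 4 * C + 1" using rc unfolding R_def C_def by simp
  have BIG: "Q * (Q - 1) \<le> 4 * (C * Q + (Q - R))"
  proof -
    have "int (q * (q - 1)) \<le> int (4 * (c * q + (q - r)))" using big by linarith
    moreover have "int (q * (q - 1)) = Q * (Q - 1)" using rq r1 unfolding Q_def by (simp add: of_nat_diff)
    moreover have "int (4 * (c * q + (q - r))) = 4 * (C * Q + (Q - R))"
      using rq unfolding Q_def C_def R_def by (simp add: of_nat_diff)
    ultimately show ?thesis by simp
  qed
  define phi where "phi x = 4 * C * x + 4 * (x - R) - x * (x - 1)" for x :: int
  have id: "(Q - R) * phi K = (Q - K) * phi R + (K - R) * phi Q + (Q - R) * (K - R) * (Q - K)"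
    unfolding phi_def by (simp add: algebra_simps)
  have pr: "phi R \<ge> 0"
  proof -
    have "phi R = R * (4 * C - R + 1)" unfolding phi_def by (simp add: algebra_simps)
    moreover have "R * (4 * C - R + 1) \<ge> 0" using R1 RC by simp
    ultimately show ?thesis by simp
  qed
  have pq: "phi Q \<ge> 0" using BIG unfolding phi_def by (simp add: algebra_simps)
  have "(Q - K) * phi R \<ge> 0" using pr KQ by simp
  moreover have "(K - R) * phi Q \<ge> 0" using pq KR by simp
  moreover have "(Q - R) * (K - R) * (Q - K) \<ge> 0" using KR KQ by simp
  ultimately have "(Q - R) * phi K \<ge> 0" using id by linarith
  moreover have "Q - R > 0" using KR KQ by simp
  ultimately have pk: "phi K \<ge> 0" by (simp add: zero_le_mult_iff)
  have "int (k * (k - 1)) = K * (K - 1)" using KR R1 unfolding K_def by (simp add: of_nat_diff)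
  moreover have "int (4 * (c * k + (k - r))) = 4 * C * K + 4 * (K - R)"
    using False unfolding K_def C_def R_def by (simp add: of_nat_diff algebra_simps)
  ultimately show ?thesis using pk unfolding phi_def by linarith
qed

definition Cq :: "nat \<Rightarrow> nat" where "Cq q = q choose 2"
definition S0 :: "nat \<Rightarrow> nat" where "S0 q = Cq q - Cq q div 2"
definition cc :: "nat \<Rightarrow> nat" where "cc q = S0 q div q"
definition hh :: "nat \<Rightarrow> nat" where "hh q = S0 q mod q"
definition rr :: "nat \<Rightarrow> nat" where "rr q = q - hh q"
definition mm :: "nat \<Rightarrow> nat \<Rightarrow> nat" where "mm q i = (if i < rr q then cc q else Suc (cc q))"

lemma Cq2: "2 * Cq q = q * (q - 1)"
proof -
  have "even (q * (q - 1))" by (cases "even q") auto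
  then show ?thesis unfolding Cq_def choose_two by simp
qed

lemma S0_bounds: "Cq q \<le> 2 * S0 q" "2 * S0 q \<le> Cq q + 1"
  unfolding S0_def by auto

lemma S0_eq: "S0 q = cc q * q + hh q"
  unfolding cc_def hh_def by simp

lemma num_facts:
  assumes p: "0 < p" and q: "0 < q" and qp: "q \<le> 4 * p"
  shows "1 \<le> rr q" "rr q \<le> q" "cc q < p" "rr q \<le> 4 * cc q + 1"
    "q * (q - 1) \<le> 4 * (cc q * q + (q - rr q))" "cc q = 0 \<Longrightarrow> rr q = 1"
    "hh q = q - rr q"
proof -
  have h: "hh q < q" unfolding hh_def using q by simp
  show r1: "1 \<le> rr q" unfolding rr_def using h by simp
  show "rr q \<le> q" unfolding rr_def by simp
  show hr: "hh q = q - rr q" unfolding rr_def using h by simp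
  have c2: "2 * Cq q = q * (q - 1)" by (rule Cq2)
  have s1: "Cq q \<le> 2 * S0 q" "2 * S0 q \<le> Cq q + 1" by (rule S0_bounds)+
  have s0: "S0 q = cc q * q + hh q" by (rule S0_eq)
  have b1: "q * (q - 1) \<le> 4 * S0 q" using c2 s1 by linarith
  have b2: "S0 q = cc q * q + (q - rr q)" using s0 hr by simp
  show big: "q * (q - 1) \<le> 4 * (cc q * q + (q - rr q))"
    using b1 b2 by simp
  have "S0 q < p * q"
  proof (cases "q \<ge> 3")
    case True
    have "q * (q - 1) \<le> q * (4 * p - 1)" using qp by (intro mult_left_mono) auto
    then have "4 * S0 q \<le> q * (4 * p - 1) + 2" using c2 s1 by linarith
    moreover have "q * (4 * p - 1) = 4 * p * q - q" by (simp add: algebra_simps diff_mult_distrib2)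
    moreover have "4 * p * q \<ge> q" using p by simp
    ultimately show ?thesis using True by linarith
  next
    case False
    then have "q = 1 \<or> q = 2" using q by auto
    then show ?thesis
    proof
      assume "q = 1" then show ?thesis using p by (simp add: S0_def Cq_def choose_two)
    next
      assume "q = 2" then show ?thesis using p by (simp add: S0_def Cq_def choose_two)
    qed
  qed
  then show "cc q < p" unfolding cc_def using q by (simp add: div_less_iff_less_mult)
  show rc: "rr q \<le> 4 * cc q + 1"
  proof (cases "q \<ge> 4")
    case True
    have A: "q * (q - 1) \<le> 4 * (cc q * q) + 4 * hh q" using big hr by simp
    have "4 * hh q \<le> q * hh q" using True by simp
    moreover have "4 * (cc q * q) = q * (4 * cc q)" by simp
    ultimately have "q * (q - 1) \<le> q * (4 * cc q) + q * hh q" using A by linarith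
    then have "q * (q - 1) \<le> q * (4 * cc q + hh q)" by (simp add: algebra_simps)
    then have "q - 1 \<le> 4 * cc q + hh q" using q by simp
    then show ?thesis using hr r1 \<open>rr q \<le> q\<close> by linarith
  next
    case False
    then have "q = 1 \<or> q = 2 \<or> q = 3" using q by auto
    then have "rr q = 1" by (auto simp: rr_def hh_def S0_def Cq_def choose_two)
    then show ?thesis by simp
  qed
  show "cc q = 0 \<Longrightarrow> rr q = 1" using rc r1 by simp
qed



lemma lip_global:
  assumes p: "0 < p" and q: "0 < q"
    and sf: "search_tree Kpq_adj (Kpq_verts p q) f" and sg: "search_tree Kpq_adj (Kpq_verts p q) g"
    and rs: "rotation_step Kpq_adj f g"
  shows "Phi p q m g \<le> Phi p q m f + 2 \<and> Phi p q m f \<le> Phi p q m g + 2"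
proof -
  obtain r where r: "st Kpq_adj f (Kpq_verts p q) r" "f r = None"
    and out: "\<forall>x. x \<notin> Kpq_verts p q \<longrightarrow> f x = None"
    using sf unfolding search_tree_def by blast
  obtain u v where huv: "f v = Some u" "g = rotate Kpq_adj f u v"
    using rs unfolding rotation_step_def by blast
  interpret krot p q f r u v
    by unfold_locales (use Ksym r out K_connV[OF p q] huv sg in auto)
  show ?thesis using lip_krot huv(2) by simp
qed

lemma path_bound:
  assumes p: "0 < p" and q: "0 < q"
  shows "(f, g) \<in> (rot_edges Kpq_adj (Kpq_verts p q)) ^^ n \<Longrightarrow> Phi p q m f \<le> Phi p q m g + 2 * n"
proof (induct n arbitrary: g)
  case 0 then show ?case by simp
next
  case (Suc n)
  obtain h where h: "(f, h) \<in> (rot_edges Kpq_adj (Kpq_verts p q)) ^^ n"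
    "(h, g) \<in> rot_edges Kpq_adj (Kpq_verts p q)"
    using relpow_Suc_E[OF Suc(2)] by blast
  have IH: "Phi p q m f \<le> Phi p q m h + 2 * n" using Suc(1)[OF h(1)] .
  have e: "search_tree Kpq_adj (Kpq_verts p q) h" "search_tree Kpq_adj (Kpq_verts p q) g"
    "rotation_step Kpq_adj h g \<or> rotation_step Kpq_adj g h"
    using h(2) unfolding rot_edges_def by auto
  have "Phi p q m h \<le> Phi p q m g + 2"
    using e lip_global[OF p q e(1) e(2), of m] lip_global[OF p q e(2) e(1), of m] by blast
  then show ?case using IH by simp
qed

section \<open>Chain trees\<close>

fun ct :: "'a list \<Rightarrow> 'a set \<Rightarrow> 'a \<Rightarrow> 'a option" where
  "ct [] L = (\<lambda>_. None)"
| "ct [x] L = (\<lambda>y. if y \<in> L then Some x else None)"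
| "ct (x # y # zs) L = (ct (y # zs) L)(y := Some x)"

lemma ct_dom: "ct cs L w = Some a \<Longrightarrow> w \<in> set (tl cs) \<union> L \<and> a \<in> set cs"
  by (induct cs L rule: ct.induct) (auto split: if_splits)

lemma par_ct_step:
  assumes "x \<notin> set (y # zs)" "x \<notin> L" "y \<notin> set zs" "y \<notin> L"
  shows "par (ct (x # y # zs) L) = insert (y, x) (par (ct (y # zs) L))"
proof -
  have "ct (y # zs) L y = None"
    using ct_dom[of "y # zs" L y] assms by (cases "ct (y # zs) L y") auto
  then show ?thesis unfolding par_def by (auto split: if_splits)
qed

lemma ct_noout:
  assumes "x \<notin> set cs" "x \<notin> L"
  shows "(x, a) \<notin> (par (ct cs L))\<^sup>+"
proof
  assume "(x, a) \<in> (par (ct cs L))\<^sup>+"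
  then obtain b where "(x, b) \<in> par (ct cs L)" by (meson converse_tranclE)
  then show False using ct_dom[of cs L x b] assms by (cases cs) auto
qed

lemma ct_rt:
  assumes "distinct cs" "set cs \<inter> L = {}" "cs \<noteq> []"
  shows "(w, hd cs) \<in> (par (ct cs L))\<^sup>* \<longleftrightarrow> w \<in> set cs \<union> L"
  using assms
proof (induct cs L arbitrary: w rule: ct.induct)
  case (1 L) then show ?case by simp
next
  case (2 x L)
  have "(w, x) \<in> (par (ct [x] L))\<^sup>* \<longleftrightarrow> w = x \<or> w \<in> L"
  proof
    assume "(w, x) \<in> (par (ct [x] L))\<^sup>*"
    then show "w = x \<or> w \<in> L"
      by (cases rule: converse_rtranclE) (auto split: if_splits)
  next
    assume "w = x \<or> w \<in> L"
    then show "(w, x) \<in> (par (ct [x] L))\<^sup>*" by (auto simp: par_def)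
  qed
  then show ?case by simp
next
  case (3 x y zs L)
  let ?R = "par (ct (y # zs) L)"
  have P: "par (ct (x # y # zs) L) = insert (y, x) ?R"
    by (rule par_ct_step) (use 3(2,3) in auto)
  have IH: "(w, y) \<in> ?R\<^sup>* \<longleftrightarrow> w \<in> set (y # zs) \<union> L" for w
    using 3(1)[of w] 3(2,3) by auto
  have nx: "(w, x) \<in> ?R\<^sup>* \<longleftrightarrow> w = x" for w
  proof -
    have "(w, x) \<notin> ?R\<^sup>+"
    proof
      assume "(w, x) \<in> ?R\<^sup>+"
      then obtain b where "(b, x) \<in> ?R" by (meson tranclD2)
      then show False using ct_dom[of "y # zs" L b x] 3(2) by auto
    qed
    then show ?thesis by (auto simp: rtrancl_eq_or_trancl)
  qed
  have "(w, x) \<in> (insert (y, x) ?R)\<^sup>* \<longleftrightarrow> (w, x) \<in> ?R\<^sup>* \<or> ((w, y) \<in> ?R\<^sup>* \<and> (x, x) \<in> ?R\<^sup>*)"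
    by (simp add: rtrancl_insert)
  also have "\<dots> \<longleftrightarrow> w \<in> set (x # y # zs) \<union> L" using IH nx by auto
  finally show ?case by (simp only: P list.sel(1))
qed

lemma ct_anc:
  assumes "distinct cs" "set cs \<inter> L = {}" "cs \<noteq> []"
  shows "a \<in> Anc (ct cs L) w \<longleftrightarrow> (\<exists>us vs. cs = us @ a # vs \<and> w \<in> set vs \<union> L)"
  using assms
proof (induct cs L arbitrary: w rule: ct.induct)
  case (1 L) then show ?case by simp
next
  case (2 x L)
  have "ct [x] L x = None" using 2 by auto
  then have "Anc (ct [x] L) x = {}" using Anc_rec[of "ct [x] L" x] by simp
  then have "Anc (ct [x] L) w = (if w \<in> L then {x} else {})"
    using Anc_rec[of "ct [x] L" w] by simp
  moreover have "(\<exists>us vs. [x] = us @ a # vs \<and> w \<in> set vs \<union> L) \<longleftrightarrow> a = x \<and> w \<in> L"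
    by (auto simp: Cons_eq_append_conv)
  ultimately show ?case by auto
next
  case (3 x y zs L)
  let ?R = "par (ct (y # zs) L)"
  have P: "par (ct (x # y # zs) L) = insert (y, x) ?R"
    by (rule par_ct_step) (use 3(2,3) in auto)
  have rt: "(w, y) \<in> ?R\<^sup>* \<longleftrightarrow> w \<in> set (y # zs) \<union> L"
    using ct_rt[of "y # zs" L w] 3(2,3) by auto
  have nx: "(x, b) \<in> ?R\<^sup>* \<longleftrightarrow> b = x" for b
    using ct_noout[of x "y # zs" L b] 3(2,3) by (auto simp: rtrancl_eq_or_trancl)
  have "a \<in> Anc (ct (x # y # zs) L) w \<longleftrightarrow> (w, a) \<in> ?R\<^sup>+ \<or> ((w, y) \<in> ?R\<^sup>* \<and> (x, a) \<in> ?R\<^sup>*)"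
    unfolding Anc_def P by (simp add: trancl_insert)
  also have "\<dots> \<longleftrightarrow> a \<in> Anc (ct (y # zs) L) w \<or> (a = x \<and> w \<in> set (y # zs) \<union> L)"
    using rt nx by (auto simp: Anc_def)
  also have "\<dots> \<longleftrightarrow> (\<exists>us vs. y # zs = us @ a # vs \<and> w \<in> set vs \<union> L) \<or> (a = x \<and> w \<in> set (y # zs) \<union> L)"
    using 3(1)[of w] 3(2,3) by auto
  also have "\<dots> \<longleftrightarrow> (\<exists>us vs. x # y # zs = us @ a # vs \<and> w \<in> set vs \<union> L)"
  proof
    assume "(\<exists>us vs. y # zs = us @ a # vs \<and> w \<in> set vs \<union> L) \<or> (a = x \<and> w \<in> set (y # zs) \<union> L)"
    then show "\<exists>us vs. x # y # zs = us @ a # vs \<and> w \<in> set vs \<union> L"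
    proof
      assume "\<exists>us vs. y # zs = us @ a # vs \<and> w \<in> set vs \<union> L"
      then obtain us vs where "y # zs = us @ a # vs" "w \<in> set vs \<union> L" by blast
      then show ?thesis by (intro exI[of _ "x # us"] exI[of _ vs]) simp
    next
      assume "a = x \<and> w \<in> set (y # zs) \<union> L"
      then show ?thesis by (intro exI[of _ "[]"] exI[of _ "y # zs"]) simp
    qed
  next
    assume "\<exists>us vs. x # y # zs = us @ a # vs \<and> w \<in> set vs \<union> L"
    then obtain us vs where uv: "x # y # zs = us @ a # vs" "w \<in> set vs \<union> L" by blast
    show "(\<exists>us vs. y # zs = us @ a # vs \<and> w \<in> set vs \<union> L) \<or> (a = x \<and> w \<in> set (y # zs) \<union> L)"
    proof (cases us)
      case Nil then show ?thesis using uv by simp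
    next
      case (Cons u us') then show ?thesis using uv by auto
    qed
  qed
  finally show ?case .
qed

lemma indep_comps_empty: "components_in E {} = {}"
  unfolding components_in_def by simp

lemma st_single: "st E h {l} l"
  by (rule st.intros) (auto simp: indep_comps_empty)

lemma ct_st:
  assumes "distinct cs" "set cs \<inter> L = {}" "cs \<noteq> []"
    and conn: "\<forall>k. 0 < k \<longrightarrow> k < length cs \<longrightarrow> connected_in E (set (drop k cs) \<union> L)"
    and ind: "\<forall>a\<in>L. \<forall>b\<in>L. \<not> E a b"
  shows "st E (ct cs L) (set cs \<union> L) (hd cs)"
  using assms
proof (induct cs L rule: ct.induct)
  case (1 L) then show ?case by simp
next
  case (2 x L)
  show ?case
  proof (rule st.intros)
    show "hd [x] \<in> set [x] \<union> L" by simp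
    have S: "set [x] \<union> L - {hd [x]} = L" using 2 by auto
    show "\<forall>C\<in>components_in E (set [x] \<union> L - {hd [x]}). \<exists>c\<in>C. ct [x] L c = Some (hd [x]) \<and> st E (ct [x] L) C c"
      unfolding S indep_comps[OF 2(5)] using st_single by auto
  qed
next
  case (3 x y zs L)
  let ?h = "ct (x # y # zs) L"
  have S: "set (x # y # zs) \<union> L - {x} = set (y # zs) \<union> L" using 3(2,3) by auto
  have c1: "connected_in E (set (y # zs) \<union> L)" using 3(5)[rule_format, of 1] by simp
  have IH: "st E (ct (y # zs) L) (set (y # zs) \<union> L) y"
  proof -
    have "\<forall>k. 0 < k \<longrightarrow> k < length (y # zs) \<longrightarrow> connected_in E (set (drop k (y # zs)) \<union> L)"
    proof (intro allI impI)
      fix k assume "0 < k" "k < length (y # zs)"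
      then show "connected_in E (set (drop k (y # zs)) \<union> L)"
        using 3(5)[rule_format, of "Suc k"] by simp
    qed
    then show ?thesis using 3(1) 3(2,3,6) by simp
  qed
  have st2: "st E ?h (set (y # zs) \<union> L) y"
    by (rule st_cong[OF IH]) simp
  show ?case
  proof (rule st.intros)
    show "hd (x # y # zs) \<in> set (x # y # zs) \<union> L" by simp
    show "\<forall>C\<in>components_in E (set (x # y # zs) \<union> L - {hd (x # y # zs)}).
          \<exists>c\<in>C. ?h c = Some (hd (x # y # zs)) \<and> st E ?h C c"
      unfolding list.sel(1) S connected_comps[OF c1] using st2 by simp
  qed
qed

lemma ct_search_tree:
  assumes "distinct cs" "set cs \<inter> L = {}" "cs \<noteq> []"
    and conn: "\<forall>k. 0 < k \<longrightarrow> k < length cs \<longrightarrow> connected_in E (set (drop k cs) \<union> L)"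
    and ind: "\<forall>a\<in>L. \<forall>b\<in>L. \<not> E a b"
    and V: "V = set cs \<union> L"
  shows "search_tree E V (ct cs L)"
  unfolding search_tree_def
proof (intro conjI exI allI impI)
  show "st E (ct cs L) V (hd cs)" using ct_st[OF assms(1-5)] V by simp
  show "ct cs L (hd cs) = None"
    using ct_dom[of cs L "hd cs"] assms(1,2,3) by (cases cs; cases "ct cs L (hd cs)") auto
  fix x assume "x \<notin> V"
  then show "ct cs L x = None" using ct_dom[of cs L x] V by (cases cs; cases "ct cs L x") auto
qed

lemma prec_sorted:
  assumes "sorted_wrt (\<lambda>a b. \<rho> a < (\<rho> b :: nat)) cs" "a \<in> set cs" "w \<in> set cs"
  shows "(\<exists>us vs. cs = us @ a # vs \<and> w \<in> set vs) \<longleftrightarrow> \<rho> a < \<rho> w"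
proof
  assume "\<exists>us vs. cs = us @ a # vs \<and> w \<in> set vs"
  then obtain us vs where "cs = us @ a # vs" "w \<in> set vs" by blast
  then show "\<rho> a < \<rho> w" using assms(1) by (simp add: sorted_wrt_append)
next
  assume lt: "\<rho> a < \<rho> w"
  obtain us vs where cs: "cs = us @ a # vs" using split_list[OF assms(2)] by blast
  have "w \<notin> set us"
  proof
    assume "w \<in> set us"
    then have "\<rho> w < \<rho> a" using assms(1) cs by (simp add: sorted_wrt_append)
    then show False using lt by simp
  qed
  moreover have "w \<noteq> a" using lt by auto
  ultimately have "w \<in> set vs" using assms(3) cs by auto
  then show "\<exists>us vs. cs = us @ a # vs \<and> w \<in> set vs" using cs by blast
qed

lemma ct_anc_sorted:
  assumes "distinct cs" "set cs \<inter> L = {}" "cs \<noteq> []"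
    and s: "sorted_wrt (\<lambda>a b. \<rho> a < (\<rho> b :: nat)) cs"
  shows "w \<in> L \<Longrightarrow> a \<in> Anc (ct cs L) w \<longleftrightarrow> a \<in> set cs"
    and "w \<in> set cs \<Longrightarrow> a \<in> Anc (ct cs L) w \<longleftrightarrow> a \<in> set cs \<and> \<rho> a < \<rho> w"
proof -
  assume "w \<in> L"
  then show "a \<in> Anc (ct cs L) w \<longleftrightarrow> a \<in> set cs"
    using ct_anc[OF assms(1-3)] split_list[of a cs] by auto
next
  assume w: "w \<in> set cs"
  then have wL: "w \<notin> L" using assms(2) by auto
  have "a \<in> Anc (ct cs L) w \<longleftrightarrow> (\<exists>us vs. cs = us @ a # vs \<and> w \<in> set vs)"
    using ct_anc[OF assms(1-3)] wL by simp
  also have "\<dots> \<longleftrightarrow> a \<in> set cs \<and> \<rho> a < \<rho> w"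
  proof (cases "a \<in> set cs")
    case True then show ?thesis using prec_sorted[OF s True w] by simp
  next
    case False then show ?thesis by auto
  qed
  finally show "a \<in> Anc (ct cs L) w \<longleftrightarrow> a \<in> set cs \<and> \<rho> a < \<rho> w" .
qed



definition T1 :: "nat \<Rightarrow> nat \<Rightarrow> nat + nat \<Rightarrow> (nat + nat) option" where
  "T1 p q = ct (map Inr [0..<q]) (Inl ` {..<p})"

definition cs2 :: "nat \<Rightarrow> nat \<Rightarrow> (nat + nat) list" where
  "cs2 p q = map Inl [Suc (cc q)..<p] @ map Inr (rev [rr q..<q]) @ Inl (cc q) # map Inr (rev [1..<rr q]) @ [Inr 0]"

definition T2 :: "nat \<Rightarrow> nat \<Rightarrow> nat + nat \<Rightarrow> (nat + nat) option" where
  "T2 p q = ct (cs2 p q) (Inl ` {..<cc q})"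

definition rho2 :: "nat \<Rightarrow> nat \<Rightarrow> nat + nat \<Rightarrow> nat" where
  "rho2 p q x = (case x of Inl j \<Rightarrow> if cc q < j then j - cc q - 1 else p - cc q - 1 + (q - rr q)
      | Inr i \<Rightarrow> p - cc q - 1 + (q - 1 - i) + (if i < rr q then 1 else 0))"

definition rho1 :: "nat + nat \<Rightarrow> nat" where
  "rho1 x = (case x of Inl j \<Rightarrow> 0 | Inr i \<Rightarrow> i)"

lemma connected_single: "connected_in E {x}"
  unfolding connected_in_def using reach_refl by auto

lemma last_in_drop: "k < length xs \<Longrightarrow> last xs \<in> set (drop k xs)"
  by (metis last_drop last_in_set drop_eq_Nil not_le)

lemma sorted_upt_rel: "(\<And>x y. a \<le> x \<Longrightarrow> x < y \<Longrightarrow> y < b \<Longrightarrow> P x y) \<Longrightarrow> sorted_wrt P [a..<b]"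
  by (rule sorted_wrt_mono_rel[OF _ sorted_wrt_upt]) auto

context
  fixes p q :: nat
  assumes p: "0 < p" and q: "0 < q"
begin

lemma T1_st: "search_tree Kpq_adj (Kpq_verts p q) (T1 p q)"
  unfolding T1_def
proof (rule ct_search_tree)
  show "distinct (map Inr [0..<q] :: (nat + nat) list)" by (simp add: distinct_map)
  show "set (map Inr [0..<q]) \<inter> Inl ` {..<p} = {}" by auto
  show "map Inr [0..<q] \<noteq> []" using q by simp
  show "\<forall>k. 0 < k \<longrightarrow> k < length (map Inr [0..<q] :: (nat + nat) list) \<longrightarrow>
      connected_in Kpq_adj (set (drop k (map Inr [0..<q])) \<union> Inl ` {..<p})"
  proof (intro allI impI)
    fix k assume "0 < k" "k < length (map Inr [0..<q] :: (nat + nat) list)"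
    then have h1: "Inr k \<in> set (drop k (map Inr [0..<q])) \<union> Inl ` {..<p}"
      by (simp add: drop_map)
    have h2: "Inl 0 \<in> set (drop k (map Inr [0..<q])) \<union> Inl ` {..<p}" using p by simp
    show "connected_in Kpq_adj (set (drop k (map Inr [0..<q])) \<union> Inl ` {..<p})"
      by (rule K_conn[OF h2 h1])
  qed
  show "\<forall>a\<in>Inl ` {..<p}. \<forall>b\<in>Inl ` {..<p}. \<not> Kpq_adj a b" by auto
  show "Kpq_verts p q = set (map Inr [0..<q]) \<union> Inl ` {..<p}"
    unfolding Kpq_verts_def by auto
qed

lemma T1_sorted: "sorted_wrt (\<lambda>a b. rho1 a < rho1 b) (map Inr [0..<q] :: (nat + nat) list)"
  unfolding sorted_wrt_map by (rule sorted_upt_rel) (simp add: rho1_def)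

lemma T1_anc:
  shows "j < p \<Longrightarrow> i < q \<Longrightarrow> Inr i \<in> Anc (T1 p q) (Inl j)"
    and "i < q \<Longrightarrow> j < q \<Longrightarrow> Inr j \<in> Anc (T1 p q) (Inr i) \<longleftrightarrow> j < i"
proof -
  have a: "distinct (map Inr [0..<q] :: (nat + nat) list)" by (simp add: distinct_map)
  have b: "set (map Inr [0..<q]) \<inter> Inl ` {..<p} = {}" by auto
  have c: "map Inr [0..<q] \<noteq> []" using q by simp
  note X = ct_anc_sorted[OF a b c T1_sorted]
  show "j < p \<Longrightarrow> i < q \<Longrightarrow> Inr i \<in> Anc (T1 p q) (Inl j)"
    unfolding T1_def using X(1)[of "Inl j" "Inr i"] by simp
  show "i < q \<Longrightarrow> j < q \<Longrightarrow> Inr j \<in> Anc (T1 p q) (Inr i) \<longleftrightarrow> j < i"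
    unfolding T1_def using X(2)[of "Inr i" "Inr j"] by (simp add: rho1_def)
qed

lemma T1_N: "i < q \<Longrightarrow> NN p (T1 p q) i = p"
proof -
  assume i: "i < q"
  have "{j. j < p \<and> Inr i \<in> Anc (T1 p q) (Inl j)} = {..<p}" using T1_anc(1)[OF _ i] by auto
  then show ?thesis unfolding NN_def by simp
qed

lemma T1_W: "WW q (T1 p q) = {(i, j). i < q \<and> j < q \<and> i \<noteq> j}"
  unfolding WW_def using T1_anc(2) by (auto simp: max_def min_def)

end

context
  fixes p q :: nat
  assumes p: "0 < p" and q: "0 < q" and qp: "q \<le> 4 * p"
begin

lemma nf: "1 \<le> rr q" "rr q \<le> q" "cc q < p" "rr q \<le> 4 * cc q + 1"
    "q * (q - 1) \<le> 4 * (cc q * q + (q - rr q))" "cc q = 0 \<Longrightarrow> rr q = 1"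
  using num_facts[OF p q qp] by auto

lemma cs2_set: "set (cs2 p q) = Inl ` {cc q..<p} \<union> Inr ` {..<q}"
proof -
  have "{..<q} = {rr q..<q} \<union> {1..<rr q} \<union> {0}" using nf(1,2) by auto
  then have "Inr ` {..<q} = Inr ` {rr q..<q} \<union> Inr ` {1..<rr q} \<union> {Inr 0}" by (simp add: image_Un)
  moreover have "{cc q..<p} = {Suc (cc q)..<p} \<union> {cc q}" using nf(3) by auto
  then have "Inl ` {cc q..<p} = Inl ` {Suc (cc q)..<p} \<union> {Inl (cc q)}" by (simp add: image_Un)
  ultimately show ?thesis unfolding cs2_def by auto
qed

lemma cs2_distinct: "distinct (cs2 p q)"
  unfolding cs2_def using nf by (auto simp: distinct_map)

lemma cs2_disj: "set (cs2 p q) \<inter> Inl ` {..<cc q} = {}"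
  unfolding cs2_set by auto

lemma cs2_ne: "cs2 p q \<noteq> []" unfolding cs2_def by simp

lemma cs2_sorted: "sorted_wrt (\<lambda>a b. rho2 p q a < rho2 p q b) (cs2 p q)"
proof -
  define c where "c = cc q"
  define r where "r = rr q"
  have c: "c < p" and r1: "1 \<le> r" and rq: "r \<le> q" using nf unfolding c_def r_def by auto
  let ?R = "\<lambda>a b. rho2 p q a < rho2 p q b"
  have rl: "rho2 p q (Inl j) = (if c < j then j - c - 1 else p - c - 1 + (q - r))" for j
    unfolding rho2_def c_def r_def by simp
  have rr': "rho2 p q (Inr i) = p - c - 1 + (q - 1 - i) + (if i < r then 1 else 0)" for i
    unfolding rho2_def c_def r_def by simp
  have sA: "sorted_wrt ?R (map Inl [Suc c..<p])"
    unfolding sorted_wrt_map by (rule sorted_upt_rel) (simp add: rl)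
  have sB: "sorted_wrt ?R (map Inr (rev [r..<q]))"
    unfolding sorted_wrt_map sorted_wrt_rev by (rule sorted_upt_rel) (simp add: rr')
  have sD: "sorted_wrt ?R (map Inr (rev [1..<r]))"
    unfolding sorted_wrt_map sorted_wrt_rev by (rule sorted_upt_rel) (use rq in \<open>simp add: rr'\<close>)
  have sDE: "sorted_wrt ?R (map Inr (rev [1..<r]) @ [Inr 0])"
    using sD rq by (auto simp: sorted_wrt_append rr')
  have sC: "sorted_wrt ?R (Inl c # map Inr (rev [1..<r]) @ [Inr 0])"
    using sDE rq r1 by (auto simp: rr' rl)
  have sBC: "sorted_wrt ?R (map Inr (rev [r..<q]) @ Inl c # map Inr (rev [1..<r]) @ [Inr 0])"
    using sB sC rq r1 by (auto simp: sorted_wrt_append rr' rl)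
  have sABC: "sorted_wrt ?R (map Inl [Suc c..<p] @ map Inr (rev [r..<q]) @ Inl c # map Inr (rev [1..<r]) @ [Inr 0])"
    using sA sBC rq r1 c by (auto simp: sorted_wrt_append rr' rl)
  then show ?thesis unfolding cs2_def c_def r_def .
qed

lemma T2_st: "search_tree Kpq_adj (Kpq_verts p q) (T2 p q)"
  unfolding T2_def
proof (rule ct_search_tree[OF cs2_distinct cs2_disj cs2_ne])
  show "\<forall>a\<in>Inl ` {..<cc q}. \<forall>b\<in>Inl ` {..<cc q}. \<not> Kpq_adj a b" by auto
  show "Kpq_verts p q = set (cs2 p q) \<union> Inl ` {..<cc q}"
  proof -
    have "{..<p} = {cc q..<p} \<union> {..<cc q}" using nf(3) by auto
    then have eq: "Inl ` {..<p} = Inl ` {cc q..<p} \<union> Inl ` {..<cc q}" by (simp add: image_Un)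
    show ?thesis unfolding cs2_set Kpq_verts_def eq by blast
  qed
  show "\<forall>k. 0 < k \<longrightarrow> k < length (cs2 p q) \<longrightarrow> connected_in Kpq_adj (set (drop k (cs2 p q)) \<union> Inl ` {..<cc q})"
  proof (intro allI impI)
    fix k assume k: "0 < k" "k < length (cs2 p q)"
    have l: "Inr 0 \<in> set (drop k (cs2 p q))"
      using last_in_drop[OF k(2)] by (simp add: cs2_def)
    show "connected_in Kpq_adj (set (drop k (cs2 p q)) \<union> Inl ` {..<cc q})"
    proof (cases "cc q = 0")
      case False
      then have h2: "Inl 0 \<in> set (drop k (cs2 p q)) \<union> Inl ` {..<cc q}" by simp
      have h1: "Inr 0 \<in> set (drop k (cs2 p q)) \<union> Inl ` {..<cc q}" using l by simp
      show ?thesis by (rule K_conn[OF h2 h1])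
    next
      case True
      have r: "rr q = 1" using nf(6) True .
      define P0 where "P0 = map Inl [Suc (cc q)..<p] @ map Inr (rev [rr q..<q])"
      have cs: "cs2 p q = P0 @ [Inl 0, Inr 0]" unfolding cs2_def P0_def using True r by simp
      show ?thesis
      proof (cases "k \<le> length P0")
        case True
        have "set (drop k (cs2 p q)) = set (drop k P0) \<union> {Inl 0, Inr 0}"
          unfolding cs using True by simp
        then show ?thesis using K_conn[of 0 _ 0] by simp
      next
        case False
        then have "k = Suc (length P0)" using k(2) cs by simp
        then have "set (drop k (cs2 p q)) = {Inr 0}" unfolding cs by simp
        then show ?thesis using \<open>cc q = 0\<close> connected_single by simp
      qed
    qed
  qed
qed

lemma T2_anc:
  shows "j < p \<Longrightarrow> i < q \<Longrightarrow> Inr i \<in> Anc (T2 p q) (Inl j) \<longleftrightarrow> j < cc q \<or> (j = cc q \<and> rr q \<le> i)"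
    and "i < j \<Longrightarrow> j < q \<Longrightarrow> Inr j \<in> Anc (T2 p q) (Inr i)"
proof -
  note X = ct_anc_sorted[OF cs2_distinct cs2_disj cs2_ne cs2_sorted]
  have rq: "rr q \<le> q" and c: "cc q < p" using nf by auto
  have ins: "i < q \<Longrightarrow> Inr i \<in> set (cs2 p q)" for i unfolding cs2_set by simp
  show "j < p \<Longrightarrow> i < q \<Longrightarrow> Inr i \<in> Anc (T2 p q) (Inl j) \<longleftrightarrow> j < cc q \<or> (j = cc q \<and> rr q \<le> i)"
  proof -
    assume j: "j < p" and i: "i < q"
    show ?thesis
    proof (cases "j < cc q")
      case True
      then show ?thesis unfolding T2_def using X(1)[of "Inl j" "Inr i"] ins[OF i] by simp
    next
      case False
      then have jin: "Inl j \<in> set (cs2 p q)" unfolding cs2_set using j by simp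
      have "Inr i \<in> Anc (T2 p q) (Inl j) \<longleftrightarrow> rho2 p q (Inr i) < rho2 p q (Inl j)"
        unfolding T2_def using X(2)[OF jin, of "Inr i"] ins[OF i] by simp
      also have "\<dots> \<longleftrightarrow> j = cc q \<and> rr q \<le> i"
        using False i j rq c unfolding rho2_def by auto
      finally show ?thesis using False by simp
    qed
  qed
  show "i < j \<Longrightarrow> j < q \<Longrightarrow> Inr j \<in> Anc (T2 p q) (Inr i)"
  proof -
    assume ij: "i < j" "j < q"
    have "rho2 p q (Inr j) < rho2 p q (Inr i)" using ij unfolding rho2_def by auto
    then show ?thesis unfolding T2_def using X(2)[of "Inr i" "Inr j"] ins ij by simp
  qed
qed

lemma T2_N: "i < q \<Longrightarrow> NN p (T2 p q) i = mm q i"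
proof -
  assume i: "i < q"
  have c: "cc q < p" using nf by simp
  have "{j. j < p \<and> Inr i \<in> Anc (T2 p q) (Inl j)} = {..<cc q} \<union> (if rr q \<le> i then {cc q} else {})"
    using T2_anc(1)[OF _ i] c by auto
  then show ?thesis unfolding NN_def mm_def by auto
qed

lemma T2_W: "WW q (T2 p q) = {}"
proof -
  have "Inr (max i j) \<in> Anc (T2 p q) (Inr (min i j))" if "i < q" "j < q" "i \<noteq> j" for i j
  proof -
    have "min i j < max i j" "max i j < q" using that by auto
    then show ?thesis by (rule T2_anc(2))
  qed
  then show ?thesis unfolding WW_def by auto
qed

end



lemma arith_aux:
  fixes a b c d e f g h i :: nat
  assumes "a + b = c + 2 * d" "e + f = g" "2 * h = g" "b + i = h" "f \<le> 4 * d"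
  shows "2 * (c + i) \<le> 2 * a + e"
  using assms by presburger

definition OD :: "nat set \<Rightarrow> (nat \<times> nat) set" where
  "OD A = {(i, j). i \<in> A \<and> j \<in> A \<and> i \<noteq> j}"

lemma card_OD:
  assumes "finite A"
  shows "card (OD A) = card A * card A - card A"
proof -
  have eq: "OD A = A \<times> A - (\<lambda>x. (x, x)) ` A" unfolding OD_def by auto
  have sub: "(\<lambda>x. (x, x)) ` A \<subseteq> A \<times> A" by auto
  have "card ((\<lambda>x. (x, x)) ` A) = card A" by (rule card_image) (simp add: inj_on_def)
  then show ?thesis unfolding eq using card_Diff_subset[OF finite_imageI[OF assms] sub]
    by (simp add: card_cartesian_product)
qed

context
  fixes p q :: nat
  assumes p: "0 < p" and q: "0 < q" and qp: "q \<le> 4 * p"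
begin

lemma nf2: "1 \<le> rr q" "rr q \<le> q" "cc q < p" "rr q \<le> 4 * cc q + 1"
    "q * (q - 1) \<le> 4 * (cc q * q + (q - rr q))" "hh q = q - rr q"
  using num_facts[OF p q qp] by auto

lemma mm_split: "mm q i = cc q + (if rr q \<le> i then 1 else 0)"
  unfolding mm_def by auto

lemma sum_ind: "finite A \<Longrightarrow> (\<Sum>i\<in>A. (if P i then 1 else 0 :: nat)) = card {i \<in> A. P i}"
proof -
  assume "finite A"
  then have "(\<Sum>i\<in>A. (if P i then 1 else 0 :: nat)) = card (A \<inter> Collect P)" by (simp add: sum.If_cases)
  also have "A \<inter> Collect P = {i \<in> A. P i}" by auto
  finally show ?thesis .
qed

lemma sum_mm: "(\<Sum>i<q. mm q i) = S0 q"
proof -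
  have "(\<Sum>i<q. mm q i) = (\<Sum>i<q. cc q) + (\<Sum>i<q. (if rr q \<le> i then 1 else 0))"
    unfolding mm_split by (rule sum.distrib)
  also have "(\<Sum>i<q. (if rr q \<le> i then 1 else 0)) = card {i \<in> {..<q}. rr q \<le> i}"
    by (rule sum_ind) simp
  also have "{i \<in> {..<q}. rr q \<le> i} = {rr q..<q}" by auto
  finally have "(\<Sum>i<q. mm q i) = cc q * q + (q - rr q)" by simp
  then show ?thesis using S0_eq[of q] nf2(6) by simp
qed

lemma sum_mm_Z:
  assumes Z: "Z \<subseteq> {..<q}"
  shows "cc q * card Z + (card Z - rr q) \<le> (\<Sum>i\<in>Z. mm q i)"
proof -
  have fin: "finite Z" using Z finite_subset by blast
  have "(\<Sum>i\<in>Z. mm q i) = (\<Sum>i\<in>Z. cc q) + (\<Sum>i\<in>Z. (if rr q \<le> i then 1 else 0))"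
    unfolding mm_split by (rule sum.distrib)
  also have "(\<Sum>i\<in>Z. (if rr q \<le> i then 1 else 0)) = card {i \<in> Z. rr q \<le> i}"
    by (rule sum_ind[OF fin])
  finally have s: "(\<Sum>i\<in>Z. mm q i) = cc q * card Z + card {i \<in> Z. rr q \<le> i}" by simp
  have "Z = {i \<in> Z. rr q \<le> i} \<union> {i \<in> Z. i < rr q}" by auto
  then have "card Z \<le> card {i \<in> Z. rr q \<le> i} + card {i \<in> Z. i < rr q}"
    by (metis card_Un_le)
  moreover have "card {i \<in> Z. i < rr q} \<le> rr q"
  proof -
    have "{i \<in> Z. i < rr q} \<subseteq> {..<rr q}" by auto
    then show ?thesis using card_mono[of "{..<rr q}"] by fastforce
  qed
  ultimately show ?thesis using s by linarith
qed

lemma FF_T1: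
  assumes Z: "Z \<subseteq> {..<q}"
  shows "2 * (p * q + Cq q div 2) \<le> FF q (mm q) (NN p (T1 p q)) (WW q (T1 p q)) Z"
proof -
  define k where "k = card Z"
  have fin: "finite Z" using Z finite_subset by blast
  have kq: "k \<le> q" unfolding k_def using card_mono[OF _ Z] by simp
  have mmp: "mm q i \<le> p" for i using nf2(3) unfolding mm_def by auto
  have tt: "tt (mm q) (NN p (T1 p q)) Z i + mm q i = p + (if i \<in> Z then 2 * mm q i else 0)" if "i < q" for i
    using T1_N[OF p q that] mmp[of i] unfolding tt_def nd_def by auto
  have F1: "(\<Sum>i<q. tt (mm q) (NN p (T1 p q)) Z i) + S0 q = p * q + 2 * (\<Sum>i\<in>Z. mm q i)"
  proof -
    have "(\<Sum>i<q. tt (mm q) (NN p (T1 p q)) Z i) + (\<Sum>i<q. mm q i)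
        = (\<Sum>i<q. tt (mm q) (NN p (T1 p q)) Z i + mm q i)" by (simp add: sum.distrib)
    also have "\<dots> = (\<Sum>i<q. p + (if i \<in> Z then 2 * mm q i else 0))" using tt by simp
    also have "\<dots> = p * q + (\<Sum>i<q. (if i \<in> Z then 2 * mm q i else 0))" by (simp add: sum.distrib)
    also have "(\<Sum>i<q. (if i \<in> Z then 2 * mm q i else 0)) = (\<Sum>i\<in>Z. 2 * mm q i)"
    proof -
      have "(\<Sum>i<q. (if i \<in> Z then 2 * mm q i else 0)) = (\<Sum>i\<in>{..<q} \<inter> Z. 2 * mm q i)"
        by (simp add: sum.inter_restrict)
      also have "{..<q} \<inter> Z = Z" using Z by auto
      finally show ?thesis .
    qed
    finally show ?thesis using sum_mm by (simp add: sum_distrib_left)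
  qed
  have pairs: "{(i, j). (i, j) \<in> WW q (T1 p q) \<and> \<not> (i \<in> Z \<and> j \<in> Z)} = OD {..<q} - OD Z"
    unfolding T1_W[OF p q] OD_def by auto
  have F2: "card {(i, j). (i, j) \<in> WW q (T1 p q) \<and> \<not> (i \<in> Z \<and> j \<in> Z)} + k * (k - 1) = q * (q - 1)"
  proof -
    have sub: "OD Z \<subseteq> OD {..<q}" using Z unfolding OD_def by auto
    have fo: "finite (OD Z)"
    proof (rule finite_subset[of _ "Z \<times> Z"])
      show "OD Z \<subseteq> Z \<times> Z" unfolding OD_def by auto
      show "finite (Z \<times> Z)" using fin by simp
    qed
    have c1: "card (OD {..<q}) = q * q - q" using card_OD[of "{..<q}"] by simp
    have c2: "card (OD Z) = k * k - k" using card_OD[OF fin] unfolding k_def .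
    have foq: "finite (OD {..<q})"
    proof (rule finite_subset[of _ "{..<q} \<times> {..<q}"])
      show "OD {..<q} \<subseteq> {..<q} \<times> {..<q}" unfolding OD_def by auto
    qed simp
    have "card (OD {..<q} - OD Z) = card (OD {..<q}) - card (OD Z)" by (rule card_Diff_subset[OF fo sub])
    moreover have "card (OD Z) \<le> card (OD {..<q})" by (rule card_mono[OF foq sub])
    ultimately have "card (OD {..<q} - OD Z) + card (OD Z) = card (OD {..<q})" by simp
    then show ?thesis unfolding pairs c1 c2 by (simp add: diff_mult_distrib2 algebra_simps)
  qed
  have F3: "2 * Cq q = q * (q - 1)" by (rule Cq2)
  have F4: "S0 q + Cq q div 2 = Cq q" unfolding S0_def by simp
  have F5: "k * (k - 1) \<le> 4 * (\<Sum>i\<in>Z. mm q i)"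
  proof -
    have "k * (k - 1) \<le> 4 * (cc q * k + (k - rr q))"
      by (rule key_ineq[OF kq nf2(1) nf2(2) nf2(4)]) (use nf2(5) in simp)
    also have "\<dots> \<le> 4 * (\<Sum>i\<in>Z. mm q i)" using sum_mm_Z[OF Z] unfolding k_def by simp
    finally show ?thesis .
  qed
  show ?thesis unfolding FF_def by (rule arith_aux[OF F1 F2 F3 F4 F5])
qed

lemma Phi_T1: "2 * (p * q + Cq q div 2) \<le> Phi p q (mm q) (T1 p q)"
  unfolding Phi_def by (rule PhiA_ge) (rule FF_T1)

lemma Phi_T2: "Phi p q (mm q) (T2 p q) = 0"
proof -
  have "FF q (mm q) (NN p (T2 p q)) (WW q (T2 p q)) {} = 0"
  proof -
    have "tt (mm q) (NN p (T2 p q)) {} i = 0" if "i < q" for i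
      using T2_N[OF p q qp that] unfolding tt_def nd_def by simp
    then show ?thesis unfolding FF_def T2_W[OF p q qp] by simp
  qed
  then show ?thesis unfolding Phi_def using PhiA_le_FF[of "{}" q "mm q"] by (metis empty_subsetI le_zero_eq)
qed

end

theorem main_bound:
  fixes p q :: nat
  assumes "0 < p" and "0 < q" and "q \<le> 4 * p"
  shows "enat (p * q + (q choose 2) div 2) \<le> rot_diam Kpq_adj (Kpq_verts p q)"
proof -
  let ?N = "p * q + (q choose 2) div 2"
  let ?R = "rot_edges Kpq_adj (Kpq_verts p q)"
  have s1: "search_tree Kpq_adj (Kpq_verts p q) (T1 p q)" using T1_st assms by blast
  have s2: "search_tree Kpq_adj (Kpq_verts p q) (T2 p q)" using T2_st assms by blast
  have d: "enat ?N \<le> rot_dist Kpq_adj (Kpq_verts p q) (T1 p q) (T2 p q)"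
    unfolding rot_dist_def
  proof (rule INF_greatest)
    fix n assume "n \<in> {n. (T1 p q, T2 p q) \<in> ?R ^^ n}"
    then have "(T1 p q, T2 p q) \<in> ?R ^^ n" by simp
    then have "Phi p q (mm q) (T1 p q) \<le> Phi p q (mm q) (T2 p q) + 2 * n"
      by (rule path_bound[OF assms(1,2)])
    then have "2 * ?N \<le> 2 * n" using Phi_T1[OF assms] Phi_T2[OF assms] unfolding Cq_def by simp
    then show "enat ?N \<le> enat n" by simp
  qed
  also have "\<dots> \<le> rot_diam Kpq_adj (Kpq_verts p q)"
    unfolding rot_diam_def
    by (rule SUP_upper2[of "(T1 p q, T2 p q)"]) (use s1 s2 in auto)
  finally show ?thesis .
qed



theorem corollary4p8:
  fixes p q :: nat
  assumes "0 < p" and "0 < q"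
    and "min 2 (real p / 4) \<le> real q" and "q \<le> 4 * p"
  shows "enat (p * q + (q choose 2) div 2) \<le> rot_diam Kpq_adj (Kpq_verts p q)"
  using main_bound[OF assms(1) assms(2) assms(4)] .

end
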